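(* In the setting below, the map $\bar{\phi}\colon D(\mathcal{A})/D(\mathcal{A}')\to D(\widetilde{\mathcal{A}''})$ is a quasi-isomorphism: it commutes with the differentials, lowers degrees by $2\operatorname{codim}x_0-1$, and induces an isomorphism in cohomology.
   Context: A complex subspace arrangement in $\mathbb{C}^l$ is a finite set of complex linear subspaces of $\mathbb{C}^l$ with no two distinct members $x\subset y$. For a finite set $\mathcal{C}$ of linear subspaces of a complex vector space $W$ with a linear order, $D(\mathcal{C})$ is the cochain complex over $\mathbb{Q}$ with basis all subsets $\sigma\subseteq\mathcal{C}$, where with $\vee\sigma=\bigcap_{x\in\sigma}x$ ($\vee\emptyset=W$), $\deg\sigma=2\operatorname{codim}_W(\vee\sigma)-|\sigma|$ and for $\sigma=\{x_{i_1},\dots,x_{i_r}\}$ in increasing order, $d\sigma=\sum_{j:\vee(\sigma\setminus\{x_{i_j}\})=\vee\sigma}(-1)^j(\sigma\setminus\{x_{i_j}\})$. Setting: $\mathcal{A}=\{x_0,\dots,x_n\}$ is a complex subspace arrangement in $\mathbb{C}^l$, $\mathcal{A}'=\mathcal{A}\setminus\{x_0\}$; on $\mathcal{A}'$, $y\sim z$ iff $x_0\cap y=x_0\cap z$, with classes $\mathcal{A}_1,\dots,\mathcal{A}_r$; the linear order is $x_0<x_1<\dots<x_n$ with elements of $\mathcal{A}_i$ preceding elements of $\mathcal{A}_j$ whenever $i<j$. $D(\mathcal{A}')$ is the subcomplex of $D(\mathcal{A})$ spanned by subsets not containing $x_0$. $\widetilde{\mathcal{A}''}=\{x_0\cap y\mid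 y\in\mathcal{A}'\}$, ordered by the order of the corresponding classes, and $D(\widetilde{\mathcal{A}''})$ is formed with ambient space $W=x_0$ (codimensions taken in $x_0$). $E=\{(y,z)\in\mathcal{A}'\times\mathcal{A}'\mid y\sim z,\ y\ne z\}$. The linear map $\phi\colon D(\mathcal{A})\to D(\widetilde{\mathcal{A}''})$ is: $\phi(\sigma)=0$ if $x_0\notin\sigma$ or if $x_0\in\sigma$ and $\{y,z\}\subseteq\sigma$ for some $(y,z)\in E$; otherwise, for $\sigma=\{x_0,x_{i_1},\dots,x_{i_r}\}$, $\phi(\sigma)=(-1)^r\{x_0\cap x_{i_1},\dots,x_0\cap x_{i_r}\}$. It vanishes on $D(\mathcal{A}')$ and $\bar\phi$ is the induced map on $D(\mathcal{A})/D(\mathcal{A}')$. $\operatorname{codim}x_0$ is the complex codimension of $x_0$ in $\mathbb{C}^l$. *)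

theory Defs
  imports "HOL-Analysis.Analysis"
begin

type_synonym 'n csub = "(complex ^ 'n) set"

definition csubspace :: "'n::finite csub \<Rightarrow> bool" where
  "csubspace x \<longleftrightarrow> vec.subspace x"

definition ccodim :: "'n::finite csub \<Rightarrow> 'n csub \<Rightarrow> nat" where
  "ccodim W x = vec.dim W - vec.dim x"

definition is_arrangement :: "'n::finite csub set \<Rightarrow> bool" where
  "is_arrangement A \<longleftrightarrow> finite A \<and> (\<forall>x\<in>A. csubspace x) \<and>
     (\<forall>x\<in>A. \<forall>y\<in>A. x \<subseteq> y \<longrightarrow> x = y)"

definition join :: "'n::finite csub \<Rightarrow> 'n csub set \<Rightarrow> 'n csub" where
  "join W \<sigma> = W \<inter> \<Inter>\<sigma>"

definition sdeg :: "'n::finite csub \<Rightarrow> 'n csub set \<Rightarrow> int" where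
  "sdeg W \<sigma> = 2 * int (ccodim W (join W \<sigma>)) - int (card \<sigma>)"

text \<open>The ordered finite set C is given by a distinct list L (order = list position).
  Position (starting at 1) of x within sigma, listed in increasing order.\<close>
definition lless :: "'a list \<Rightarrow> 'a \<Rightarrow> 'a \<Rightarrow> bool" where
  "lless L y x \<longleftrightarrow> (\<exists>i j. i < j \<and> j < length L \<and> L ! i = y \<and> L ! j = x)"

definition spos :: "'a list \<Rightarrow> 'a set \<Rightarrow> 'a \<Rightarrow> nat" where
  "spos L \<sigma> x = Suc (card {y\<in>\<sigma>. lless L y x})"

definition dcoef :: "'n::finite csub list \<Rightarrow> 'n csub \<Rightarrow> 'n csub set \<Rightarrow> 'n csub set \<Rightarrow> rat" where
  "dcoef L W \<sigma> \<tau> = (\<Sum>x\<in>\<sigma>. if \<tau> = \<sigma> - {x} \<and> join W (\<sigma> - {x}) = join W \<sigma>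
                            then (-1) ^ spos L \<sigma> x else 0)"

text \<open>Cochains of D(C): rational linear combinations of subsets of C,
  represented by their coefficient functions.\<close>
definition cochains :: "'a set \<Rightarrow> ('a set \<Rightarrow> rat) set" where
  "cochains C = {c. \<forall>\<sigma>. c \<sigma> \<noteq> 0 \<longrightarrow> \<sigma> \<subseteq> C}"

definition hcochains :: "'n::finite csub \<Rightarrow> 'n csub set \<Rightarrow> int \<Rightarrow> ('n csub set \<Rightarrow> rat) set" where
  "hcochains W C k = {c \<in> cochains C. \<forall>\<sigma>. c \<sigma> \<noteq> 0 \<longrightarrow> sdeg W \<sigma> = k}"

definition dif :: "'n::finite csub list \<Rightarrow> 'n csub \<Rightarrow> ('n csub set \<Rightarrow> rat) \<Rightarrow> ('n csub set \<Rightarrow> rat)" where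
  "dif L W c = (\<lambda>\<tau>. \<Sum>\<sigma>\<in>Pow (set L). c \<sigma> * dcoef L W \<sigma> \<tau>)"

definition sim :: "'n::finite csub \<Rightarrow> 'n csub \<Rightarrow> 'n csub \<Rightarrow> bool" where
  "sim x0 y z \<longleftrightarrow> x0 \<inter> y = x0 \<inter> z"

text \<open>The ordered set tilde A'': intersections with x0, in the order of the classes
  (under the contiguity hypothesis on L, list order of first occurrences).\<close>
definition tA2 :: "'n::finite csub list \<Rightarrow> 'n csub list" where
  "tA2 L = remdups (map (\<lambda>y. hd L \<inter> y) (tl L))"

definition phicoef :: "'n::finite csub list \<Rightarrow> 'n csub set \<Rightarrow> 'n csub set \<Rightarrow> rat" where
  "phicoef L \<sigma> \<tau> =
     (if hd L \<in> \<sigma> \<and> \<not> (\<exists>y\<in>\<sigma> - {hd L}. \<exists>z\<in>\<sigma> - {hd L}. y \<noteq> z \<and> sim (hd L) y z)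
         \<and> \<tau> = (\<lambda>y. hd L \<inter> y) ` (\<sigma> - {hd L})
      then (-1) ^ (card \<sigma> - 1) else 0)"

definition phi :: "'n::finite csub list \<Rightarrow> ('n csub set \<Rightarrow> rat) \<Rightarrow> ('n csub set \<Rightarrow> rat)" where
  "phi L c = (\<lambda>\<tau>. \<Sum>\<sigma>\<in>Pow (set L). c \<sigma> * phicoef L \<sigma> \<tau>)"

end

theory Submission
  imports Defs
begin

definition idx :: "'a list \<Rightarrow> 'a \<Rightarrow> nat" where
  "idx xs a = (LEAST i. i < length xs \<and> xs ! i = a)"

lemma idx_props: assumes "a \<in> set xs" shows "idx xs a < length xs" "xs ! idx xs a = a"
proof -
  obtain i where "i < length xs" "xs ! i = a" using assms by (auto simp: in_set_conv_nth)
  hence "idx xs a < length xs \<and> xs ! idx xs a = a" unfolding idx_def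
    by (rule LeastI[of "\<lambda>i. i < length xs \<and> xs ! i = a" i, OF conjI])
  thus "idx xs a < length xs" "xs ! idx xs a = a" by auto
qed

lemma idx_nth: assumes "distinct xs" "i < length xs" shows "idx xs (xs ! i) = i"
proof -
  have m: "xs ! i \<in> set xs" using assms by simp
  have "xs ! idx xs (xs ! i) = xs ! i" using idx_props(2)[OF m] .
  thus ?thesis using nth_eq_iff_index_eq[OF assms(1) idx_props(1)[OF m] assms(2)] by simp
qed

lemma lless_idx: "distinct xs \<Longrightarrow> lless xs a b \<longleftrightarrow> a \<in> set xs \<and> b \<in> set xs \<and> idx xs a < idx xs b"
proof
  assume d: "distinct xs" and "lless xs a b"
  then obtain i j where ij: "i < j" "j < length xs" "xs ! i = a" "xs ! j = b" unfolding lless_def by blast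
  thus "a \<in> set xs \<and> b \<in> set xs \<and> idx xs a < idx xs b"
    using idx_nth[OF d, of i] idx_nth[OF d, of j] by auto
next
  assume "a \<in> set xs \<and> b \<in> set xs \<and> idx xs a < idx xs b"
  thus "lless xs a b" unfolding lless_def using idx_props[of a xs] idx_props[of b xs] by blast
qed

lemma lless_irrefl: "distinct xs \<Longrightarrow> \<not> lless xs a a" by (simp add: lless_idx)
lemma lless_asym: "distinct xs \<Longrightarrow> lless xs a b \<Longrightarrow> \<not> lless xs b a" by (simp add: lless_idx)
lemma lless_trans: "distinct xs \<Longrightarrow> lless xs a b \<Longrightarrow> lless xs b c \<Longrightarrow> lless xs a c" by (simp add: lless_idx)
lemma lless_total: "distinct xs \<Longrightarrow> a \<in> set xs \<Longrightarrow> b \<in> set xs \<Longrightarrow> a \<noteq> b \<Longrightarrow> lless xs a b \<or> lless xs b a"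
proof -
  assume d: "distinct xs" and ab: "a \<in> set xs" "b \<in> set xs" "a \<noteq> b"
  hence "idx xs a \<noteq> idx xs b" using idx_props(2)[of a xs] idx_props(2)[of b xs] by metis
  thus ?thesis using lless_idx[OF d] ab by (auto simp: nat_neq_iff)
qed
lemma lless_set: "lless xs a b \<Longrightarrow> a \<in> set xs \<and> b \<in> set xs"
  unfolding lless_def by auto

lemma lless_Cons: "lless (x # xs) a b \<longleftrightarrow> (a = x \<and> b \<in> set xs) \<or> lless xs a b"
proof
  assume "lless (x # xs) a b"
  then obtain i j where ij: "i < j" "j < length (x # xs)" "(x#xs) ! i = a" "(x#xs) ! j = b"
    unfolding lless_def by blast
  then obtain j' where j': "j = Suc j'" by (cases j) auto
  show "(a = x \<and> b \<in> set xs) \<or> lless xs a b"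
  proof (cases i)
    case 0
    thus ?thesis using ij j' by auto
  next
    case (Suc i')
    hence "i' < j'" "j' < length xs" "xs ! i' = a" "xs ! j' = b" using ij j' by auto
    thus ?thesis unfolding lless_def by blast
  qed
next
  assume "(a = x \<and> b \<in> set xs) \<or> lless xs a b"
  thus "lless (x # xs) a b"
  proof
    assume "a = x \<and> b \<in> set xs"
    then obtain j where "j < length xs" "xs ! j = b" "a = x" by (auto simp: in_set_conv_nth)
    hence "0 < Suc j \<and> Suc j < length (x # xs) \<and> (x # xs) ! 0 = a \<and> (x # xs) ! Suc j = b" by simp
    thus ?thesis unfolding lless_def by blast
  next
    assume "lless xs a b"
    then obtain i j where "i < j" "j < length xs" "xs ! i = a" "xs ! j = b" unfolding lless_def by blast
    hence "Suc i < Suc j \<and> Suc j < length (x # xs) \<and> (x # xs) ! Suc i = a \<and> (x # xs) ! Suc j = b" by simp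
    thus ?thesis unfolding lless_def by blast
  qed
qed

lemma lless_append: "a \<in> set p \<Longrightarrow> b \<in> set q \<Longrightarrow> lless (p @ q) a b"
  unfolding lless_def
proof -
  assume "a \<in> set p" "b \<in> set q"
  then obtain i j where "i < length p" "p ! i = a" "j < length q" "q ! j = b" by (auto simp: in_set_conv_nth)
  thus "\<exists>i j. i < j \<and> j < length (p @ q) \<and> (p @ q) ! i = a \<and> (p @ q) ! j = b"
    by (intro exI[of _ i] exI[of _ "length p + j"]) (auto simp: nth_append)
qed

lemma lless_append_rev: "distinct (p @ q) \<Longrightarrow> a \<in> set p \<Longrightarrow> b \<in> set q \<Longrightarrow> \<not> lless (p @ q) b a"
  using lless_append[of a p b q] lless_asym[of "p @ q" a b] by blast

definition lin :: "'a set \<Rightarrow> ('a set \<Rightarrow> 'a set \<Rightarrow> rat) \<Rightarrow> ('a set \<Rightarrow> rat) \<Rightarrow> ('a set \<Rightarrow> rat)" where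
  "lin V M c = (\<lambda>\<tau>. \<Sum>\<sigma>\<in>Pow V. c \<sigma> * M \<sigma> \<tau>)"

lemma dif_lin: "dif L W c = lin (set L) (dcoef L W) c" by (simp add: dif_def lin_def)
lemma phi_lin: "phi L c = lin (set L) (phicoef L) c" by (simp add: phi_def lin_def)

lemma lin_comp: "lin V N (lin V' M c) = lin V' (\<lambda>\<sigma> \<tau>. \<Sum>\<rho>\<in>Pow V. M \<sigma> \<rho> * N \<rho> \<tau>) c"
proof (rule ext)
  fix \<tau>
  have "lin V N (lin V' M c) \<tau> = (\<Sum>\<rho>\<in>Pow V. \<Sum>\<sigma>\<in>Pow V'. c \<sigma> * M \<sigma> \<rho> * N \<rho> \<tau>)"
    by (simp add: lin_def sum_distrib_right)
  also have "\<dots> = (\<Sum>\<sigma>\<in>Pow V'. \<Sum>\<rho>\<in>Pow V. c \<sigma> * M \<sigma> \<rho> * N \<rho> \<tau>)" by (rule sum.swap)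
  also have "\<dots> = lin V' (\<lambda>\<sigma> \<tau>. \<Sum>\<rho>\<in>Pow V. M \<sigma> \<rho> * N \<rho> \<tau>) c \<tau>"
    by (simp add: lin_def sum_distrib_left mult.assoc)
  finally show "lin V N (lin V' M c) \<tau> = lin V' (\<lambda>\<sigma> \<tau>. \<Sum>\<rho>\<in>Pow V. M \<sigma> \<rho> * N \<rho> \<tau>) c \<tau>" .
qed

lemma lin_add: "lin V M (\<lambda>x. a x + b x) = (\<lambda>\<tau>. lin V M a \<tau> + lin V M b \<tau>)"
  by (simp add: lin_def distrib_right sum.distrib)
lemma lin_diff: "lin V M (\<lambda>x. a x - b x) = (\<lambda>\<tau>. lin V M a \<tau> - lin V M b \<tau>)"
  by (simp add: lin_def left_diff_distrib sum_subtractf)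
lemma lin_zero: "lin V M (\<lambda>_. 0) = (\<lambda>_. 0)"
  by (simp add: lin_def)

lemma lin_cong: "(\<And>\<sigma>. \<sigma> \<subseteq> V \<Longrightarrow> c \<sigma> \<noteq> 0 \<Longrightarrow> M \<sigma> \<tau> = N \<sigma> \<tau>) \<Longrightarrow> lin V M c \<tau> = lin V N c \<tau>"
  unfolding lin_def by (rule sum.cong) auto

lemma lin_id: assumes "finite V" "\<And>\<sigma>. c \<sigma> \<noteq> 0 \<Longrightarrow> \<sigma> \<subseteq> V"
  shows "lin V (\<lambda>\<sigma> \<tau>. if \<tau> = \<sigma> then 1 else 0) c \<tau> = c \<tau>"
proof (cases "\<tau> \<subseteq> V")
  case True
  thus ?thesis unfolding lin_def using assms(1)
    by (simp add: if_distrib[of "\<lambda>x. _ * x"] sum.delta' cong: if_cong)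
next
  case False
  hence "c \<tau> = 0" using assms(2) by blast
  thus ?thesis unfolding lin_def using False
    by (auto intro!: sum.neutral)
qed

lemma lin_nz: "lin V M c \<tau> \<noteq> 0 \<Longrightarrow> \<exists>\<sigma>. \<sigma> \<subseteq> V \<and> c \<sigma> \<noteq> 0 \<and> M \<sigma> \<tau> \<noteq> 0"
  unfolding lin_def by (metis (no_types, lifting) PowD mult_not_zero sum.neutral)

lemma lin_supp: assumes "\<And>\<sigma> \<tau>. \<sigma> \<subseteq> V \<Longrightarrow> P \<sigma> \<Longrightarrow> M \<sigma> \<tau> \<noteq> 0 \<Longrightarrow> P' \<tau>"
    and "\<And>\<sigma>. c \<sigma> \<noteq> 0 \<Longrightarrow> P \<sigma>" and "lin V M c \<tau> \<noteq> 0"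
  shows "P' \<tau>"
  using lin_nz[OF assms(3)] assms(1,2) by blast

lemma sum_single: "finite S \<Longrightarrow> a \<in> S \<Longrightarrow> (\<And>x. x \<in> S \<Longrightarrow> x \<noteq> a \<Longrightarrow> g x = 0) \<Longrightarrow> sum g S = g a"
  by (metis (mono_tags, lifting) sum.remove sum.neutral DiffE insertCI add_0_right)

lemma sum_zero_if: "(\<And>x. x \<in> S \<Longrightarrow> g x = 0) \<Longrightarrow> sum g S = 0" by simp

lemma dsum: assumes "\<sigma> \<subseteq> set L"
  shows "(\<Sum>\<rho>\<in>Pow (set L). dcoef L W \<sigma> \<rho> * g \<rho>) =
    (\<Sum>x\<in>\<sigma>. if join W (\<sigma> - {x}) = join W \<sigma> then (-1) ^ spos L \<sigma> x * g (\<sigma> - {x}) else 0)"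
proof -
  have "(\<Sum>\<rho>\<in>Pow (set L). dcoef L W \<sigma> \<rho> * g \<rho>) =
     (\<Sum>\<rho>\<in>Pow (set L). \<Sum>x\<in>\<sigma>. (if \<rho> = \<sigma> - {x} \<and> join W (\<sigma> - {x}) = join W \<sigma>
                            then (-1) ^ spos L \<sigma> x else 0) * g \<rho>)"
    by (simp add: dcoef_def sum_distrib_right)
  also have "\<dots> = (\<Sum>x\<in>\<sigma>. \<Sum>\<rho>\<in>Pow (set L). (if \<rho> = \<sigma> - {x} \<and> join W (\<sigma> - {x}) = join W \<sigma>
                            then (-1) ^ spos L \<sigma> x else 0) * g \<rho>)" by (rule sum.swap)
  also have "\<dots> = (\<Sum>x\<in>\<sigma>. if join W (\<sigma> - {x}) = join W \<sigma> then (-1) ^ spos L \<sigma> x * g (\<sigma> - {x}) else 0)"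
  proof (rule sum.cong[OF refl])
    fix x assume "x \<in> \<sigma>"
    have m: "\<sigma> - {x} \<in> Pow (set L)" using assms by auto
    show "(\<Sum>\<rho>\<in>Pow (set L). (if \<rho> = \<sigma> - {x} \<and> join W (\<sigma> - {x}) = join W \<sigma>
                            then (-1) ^ spos L \<sigma> x else 0) * g \<rho>) =
       (if join W (\<sigma> - {x}) = join W \<sigma> then (-1) ^ spos L \<sigma> x * g (\<sigma> - {x}) else 0)"
      by (subst sum_single[OF _ m]) auto
  qed
  finally show ?thesis .
qed

lemma join_anti: "S \<subseteq> S' \<Longrightarrow> join W S' \<subseteq> join W S"
  unfolding join_def by auto

lemma spos_remove: assumes "finite \<sigma>" "x \<in> \<sigma>"
  shows "spos L (\<sigma> - {x}) y = (if lless L x y then spos L \<sigma> y - 1 else spos L \<sigma> y)"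
    and "lless L x y \<Longrightarrow> spos L \<sigma> y \<ge> 2"
proof -
  have e: "{z\<in>\<sigma> - {x}. lless L z y} = {z\<in>\<sigma>. lless L z y} - {x}" by auto
  have f: "finite {z\<in>\<sigma>. lless L z y}" using assms by auto
  have c1: "card {z\<in>\<sigma>. lless L z y} \<ge> 1" if "lless L x y"
  proof -
    have "x \<in> {z\<in>\<sigma>. lless L z y}" using assms that by auto
    thus ?thesis using f by (metis One_nat_def card_0_eq empty_iff less_one not_le)
  qed
  show "spos L (\<sigma> - {x}) y = (if lless L x y then spos L \<sigma> y - 1 else spos L \<sigma> y)"
  proof (cases "lless L x y")
    case True
    have "x \<in> {z\<in>\<sigma>. lless L z y}" using assms True by auto
    thus ?thesis unfolding spos_def e using f c1[OF True] True by (simp add: card_Diff_singleton_if)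
  next
    case False
    hence "x \<notin> {z\<in>\<sigma>. lless L z y}" by auto
    thus ?thesis unfolding spos_def e using False by simp
  qed
  show "lless L x y \<Longrightarrow> spos L \<sigma> y \<ge> 2"
    using c1 unfolding spos_def by simp
qed

lemma sum_invol_zero:
  assumes "finite S" "\<And>p. p \<in> S \<Longrightarrow> i p \<in> S" "\<And>p. p \<in> S \<Longrightarrow> i (i p) = p"
    "\<And>p. p \<in> S \<Longrightarrow> F (i p) = - F p"
  shows "sum F S = (0::rat)"
proof -
  have "sum F S = sum (\<lambda>p. F (i p)) S"
    by (rule sum.reindex_bij_witness[of _ i i]) (use assms in auto)
  also have "\<dots> = - sum F S" using assms(4) by (simp add: sum_negf)
  finally show ?thesis by simp
qed

lemma dd_zero: assumes d: "distinct L" and s: "\<sigma> \<subseteq> set L"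
  shows "(\<Sum>\<rho>\<in>Pow (set L). dcoef L W \<sigma> \<rho> * dcoef L W \<rho> \<tau>) = 0"
proof -
  have fin: "finite \<sigma>" using s finite_subset by blast
  define F where "F = (\<lambda>(x,y). if join W (\<sigma> - {x} - {y}) = join W \<sigma> \<and> \<tau> = \<sigma> - {x} - {y}
        then ((-1::rat) ^ spos L \<sigma> x * (-1) ^ spos L (\<sigma> - {x}) y) else 0)"
  have "(\<Sum>\<rho>\<in>Pow (set L). dcoef L W \<sigma> \<rho> * dcoef L W \<rho> \<tau>) =
     (\<Sum>x\<in>\<sigma>. if join W (\<sigma> - {x}) = join W \<sigma> then (-1) ^ spos L \<sigma> x * dcoef L W (\<sigma> - {x}) \<tau> else 0)"
    by (rule dsum[OF s])
  also have "\<dots> = (\<Sum>x\<in>\<sigma>. \<Sum>y\<in>\<sigma> - {x}. F (x, y))"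
  proof (rule sum.cong[OF refl])
    fix x assume x: "x \<in> \<sigma>"
    have j: "join W (\<sigma> - {x}) = join W \<sigma> \<and> join W (\<sigma> - {x} - {y}) = join W (\<sigma> - {x}) \<longleftrightarrow>
               join W (\<sigma> - {x} - {y}) = join W \<sigma>" for y
      using join_anti[of "\<sigma> - {x}" \<sigma> W] join_anti[of "\<sigma> - {x} - {y}" "\<sigma> - {x}" W] by auto
    show "(if join W (\<sigma> - {x}) = join W \<sigma> then (-1) ^ spos L \<sigma> x * dcoef L W (\<sigma> - {x}) \<tau> else 0)
       = (\<Sum>y\<in>\<sigma> - {x}. F (x, y))"
    proof (cases "join W (\<sigma> - {x}) = join W \<sigma>")
      case True
      thus ?thesis unfolding dcoef_def F_def using j
        by (simp add: sum_distrib_left if_distrib[of "\<lambda>z. _ * z"] conj_commute cong: if_cong)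
    next
      case False
      have "(\<Sum>y\<in>\<sigma> - {x}. F (x, y)) = 0" unfolding F_def using j False by (intro sum.neutral) auto
      thus ?thesis using False by simp
    qed
  qed
  also have "\<dots> = (\<Sum>(x,y)\<in>(SIGMA x:\<sigma>. \<sigma> - {x}). F (x, y))" by (rule sum.Sigma) (use fin in auto)
  also have "\<dots> = sum F (SIGMA x:\<sigma>. \<sigma> - {x})" by (simp add: case_prod_beta')
  also have "\<dots> = 0"
  proof (rule sum_invol_zero[where i = "\<lambda>(x,y). (y,x)"])
    show "finite (SIGMA x:\<sigma>. \<sigma> - {x})" using fin by auto
  next
    fix p assume "p \<in> (SIGMA x:\<sigma>. \<sigma> - {x})"
    then obtain x y where p: "p = (x,y)" "x \<in> \<sigma>" "y \<in> \<sigma>" "x \<noteq> y" by auto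
    show "(case p of (x, y) \<Rightarrow> (y, x)) \<in> (SIGMA x:\<sigma>. \<sigma> - {x})" using p by auto
    show "(case (case p of (x, y) \<Rightarrow> (y, x)) of (x, y) \<Rightarrow> (y, x)) = p" using p by auto
    have sw: "\<sigma> - {y} - {x} = \<sigma> - {x} - {y}" by auto
    have xyL: "x \<in> set L" "y \<in> set L" using p s by auto
    have key: "(-1::rat) ^ spos L \<sigma> y * (-1) ^ spos L (\<sigma> - {y}) x =
               - ((-1) ^ spos L \<sigma> x * (-1) ^ spos L (\<sigma> - {x}) y)"
    proof (cases "lless L x y")
      case True
      hence ny: "\<not> lless L y x" using lless_asym[OF d] by blast
      have "spos L \<sigma> y \<ge> 2" using spos_remove(2)[OF fin p(2) True] .
      then obtain m where m: "spos L \<sigma> y = Suc m" by (cases "spos L \<sigma> y") auto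
      show ?thesis using spos_remove(1)[OF fin p(2), where y=y and L=L] spos_remove(1)[OF fin p(3), where y=x and L=L] True ny m
        by (simp add: power_add[symmetric] add.commute)
    next
      case False
      hence yx: "lless L y x" using lless_total[OF d xyL p(4)] by blast
      have "spos L \<sigma> x \<ge> 2" using spos_remove(2)[OF fin p(3) yx] .
      then obtain m where m: "spos L \<sigma> x = Suc m" by (cases "spos L \<sigma> x") auto
      show ?thesis using spos_remove(1)[OF fin p(2), where y=y and L=L] spos_remove(1)[OF fin p(3), where y=x and L=L] False yx m
        by (simp add: power_add[symmetric] add.commute)
    qed
    show "F (case p of (x, y) \<Rightarrow> (y, x)) = - F p"
      unfolding F_def p using sw key by simp
  qed
  finally show ?thesis .
qed

lemma remdups_append_split: "remdups (xs @ ys) = remdups (filter (\<lambda>a. a \<notin> set ys) xs) @ remdups ys"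
  by (induction xs) auto

locale setting =
  fixes L :: "'n::finite csub list"
  assumes ne: "L \<noteq> []" and dist: "distinct L" and arr: "is_arrangement (set L)"
  and contig: "\<And>i j k. 1 \<le> i \<Longrightarrow> i < j \<Longrightarrow> j < k \<Longrightarrow> k < length L \<Longrightarrow>
                 sim (hd L) (L ! i) (L ! k) \<Longrightarrow> sim (hd L) (L ! i) (L ! j)"
begin

abbreviation "x0 \<equiv> hd L"
abbreviation "U \<equiv> set L"
abbreviation "A' \<equiv> set (tl L)"
abbreviation "T \<equiv> set (tA2 L)"

definition lab :: "'n csub \<Rightarrow> 'n csub" where "lab y = x0 \<inter> y"

definition C :: "'n csub \<Rightarrow> 'n csub set" where "C u = {y \<in> A'. lab y = u}"

definition fr :: "'n csub \<Rightarrow> 'n csub" where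
  "fr u = tl L ! (LEAST i. i < length (tl L) \<and> lab (tl L ! i) = u)"

lemma L_eq: "L = x0 # tl L" using ne by simp
lemma U_eq: "U = insert x0 A'" by (subst L_eq) simp
lemma dist_tl: "distinct (tl L)" using dist by (simp add: distinct_tl)
lemma x0_notin: "x0 \<notin> A'"
proof -
  have "distinct (x0 # tl L)" using dist L_eq by simp
  thus ?thesis by simp
qed
lemma finU: "finite U" by simp
lemma T_eq: "T = lab ` A'" by (simp add: tA2_def lab_def)
lemma dist_tA2: "distinct (tA2 L)" by (simp add: tA2_def)

lemma x0_less: "y \<in> A' \<Longrightarrow> lless L x0 y"
  by (subst L_eq) (simp add: lless_Cons)

lemma not_less_x0: "\<not> lless L y x0"
proof
  assume "lless L y x0"
  hence "(y = x0 \<and> x0 \<in> A') \<or> lless (tl L) y x0" by (subst (asm) L_eq) (simp add: lless_Cons)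
  thus False using x0_notin lless_set[of "tl L" y x0] by blast
qed

lemma lless_tl: "a \<in> A' \<Longrightarrow> lless L a b \<longleftrightarrow> lless (tl L) a b"
  using x0_notin by (subst L_eq) (auto simp: lless_Cons)

lemma lless_A': assumes "lless L a b" shows "b \<in> A'"
proof -
  have "b \<in> U" using lless_set[OF assms] by simp
  moreover have "b \<noteq> x0" using assms not_less_x0 by auto
  ultimately show ?thesis using U_eq by simp
qed

lemma idx_x0: "idx L x0 = 0"
  using idx_nth[OF dist, of 0] ne by (simp add: hd_conv_nth)

lemma contig': assumes "a \<in> A'" "lless L a b" "lless L b c" "lab a = lab c"
  shows "lab a = lab b"
proof -
  have aU: "a \<in> U" "b \<in> U" "c \<in> U" using lless_set[OF assms(2)] lless_set[OF assms(3)] by auto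
  have ia: "idx L a \<noteq> 0"
  proof
    assume "idx L a = 0"
    hence "a = x0" using idx_props(2)[OF aU(1)] ne by (simp add: hd_conv_nth)
    thus False using assms(1) x0_notin by simp
  qed
  have "idx L a < idx L b" "idx L b < idx L c" using assms lless_idx[OF dist] by auto
  moreover have "idx L c < length L" using idx_props(1)[OF aU(3)] .
  ultimately have "sim x0 (L ! idx L a) (L ! idx L b)"
    using contig[of "idx L a" "idx L b" "idx L c"] ia assms(4)
    by (simp add: idx_props(2)[OF aU(1)] idx_props(2)[OF aU(3)] sim_def lab_def)
  thus ?thesis by (simp add: idx_props(2)[OF aU(1)] idx_props(2)[OF aU(2)] sim_def lab_def)
qed

lemma fr_props: assumes "u \<in> T" shows "fr u \<in> C u" "\<And>y. y \<in> C u \<Longrightarrow> y \<noteq> fr u \<Longrightarrow> lless L (fr u) y"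
proof -
  define P where "P = (\<lambda>i. i < length (tl L) \<and> lab (tl L ! i) = u)"
  obtain y where y: "y \<in> A'" "lab y = u" using assms T_eq by auto
  obtain i where "i < length (tl L)" "tl L ! i = y" using y(1) by (auto simp: in_set_conv_nth)
  hence Pi: "P i" using y P_def by auto
  have PL: "P (Least P)" by (rule LeastI[of P, OF Pi])
  show fC: "fr u \<in> C u" using PL unfolding fr_def C_def P_def by auto
  fix z assume z: "z \<in> C u" "z \<noteq> fr u"
  obtain j where j: "j < length (tl L)" "tl L ! j = z" using z(1) by (auto simp: in_set_conv_nth C_def)
  hence "P j" using z(1) P_def C_def by auto
  hence "Least P \<le> j" by (rule Least_le)
  moreover have "Least P \<noteq> j" using z(2) j unfolding fr_def P_def by auto
  ultimately have "Least P < j" by simp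
  hence "lless (tl L) (fr u) z" unfolding lless_def fr_def P_def[symmetric] using j by blast
  thus "lless L (fr u) z" using lless_tl fC C_def by auto
qed

lemma lab_T: "y \<in> A' \<Longrightarrow> lab y \<in> T" by (simp add: T_eq)
lemma C_lab: "y \<in> A' \<Longrightarrow> y \<in> C (lab y)" by (simp add: C_def)
lemma lab_fr: "u \<in> T \<Longrightarrow> lab (fr u) = u" using fr_props(1) by (simp add: C_def)
lemma fr_A': "u \<in> T \<Longrightarrow> fr u \<in> A'" using fr_props(1) by (simp add: C_def)

lemma fr_between: assumes "u \<in> T" "y \<in> C u" "lless L (fr u) w" "lless L w y"
  shows "w \<in> C u"
proof -
  have f: "fr u \<in> A'" "lab (fr u) = u" using fr_props(1)[OF assms(1)] by (auto simp: C_def)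
  have "lab (fr u) = lab w" using contig'[OF f(1) assms(3,4)] assms(2) f by (simp add: C_def)
  moreover have "w \<in> A'" using lless_A'[OF assms(3)] .
  ultimately show ?thesis using f by (simp add: C_def)
qed

lemma tA2_order: assumes "x \<in> A'" "y \<in> A'" "lab x \<noteq> lab y" "lless L x y"
  shows "lless (tA2 L) (lab x) (lab y)"
proof -
  define M where "M = tl L"
  have dM: "distinct M" using dist_tl M_def by simp
  have xy: "lless M x y" using assms lless_tl M_def by simp
  define j where "j = idx M y"
  have jl: "j < length M" "M ! j = y" using idx_props[of y M] assms(2) M_def j_def by auto
  have xj: "idx M x < j" using xy lless_idx[OF dM] j_def by simp
  define p where "p = take j M"
  define q where "q = drop j M"
  have Mpq: "M = p @ q" using p_def q_def by simp
  have yq: "y \<in> set q" using jl q_def by (metis Cons_nth_drop_Suc list.set_intros(1))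
  have xp: "x \<in> set p"
  proof -
    have "p ! idx M x = x" using xj p_def idx_props(2)[of x M] assms(1) M_def by simp
    moreover have "idx M x < length p" using xj jl p_def by simp
    ultimately show ?thesis by (metis nth_mem)
  qed
  have nq: "lab x \<notin> lab ` set q"
  proof
    assume "lab x \<in> lab ` set q"
    then obtain w where w: "w \<in> set q" "lab w = lab x" by auto
    then obtain k where k: "k < length q" "q ! k = w" by (auto simp: in_set_conv_nth)
    hence wM: "w = M ! (j + k)" "j + k < length M" using q_def jl by auto
    show False
    proof (cases "k = 0")
      case True thus False using wM jl w assms(3) by simp
    next
      case False
      hence "lless M y w" unfolding lless_def using wM jl by (intro exI[of _ j] exI[of _ "j+k"]) auto
      hence "lless L y w" using lless_tl assms(2) M_def by simp
      thus False using contig'[OF assms(1,4)] w assms(3) by simp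
    qed
  qed
  have "tA2 L = remdups (filter (\<lambda>a. a \<notin> set (map lab q)) (map lab p)) @ remdups (map lab q)"
    unfolding tA2_def lab_def[abs_def] M_def[symmetric] Mpq
    by (simp only: map_append remdups_append_split)
  moreover have "lab x \<in> set (remdups (filter (\<lambda>a. a \<notin> set (map lab q)) (map lab p)))"
    using xp nq by auto
  moreover have "lab y \<in> set (remdups (map lab q))" using yq by auto
  ultimately show ?thesis using lless_append by (simp only:)
qed

lemma tA2_order_iff: assumes "x \<in> A'" "y \<in> A'" "lab x \<noteq> lab y"
  shows "lless (tA2 L) (lab x) (lab y) \<longleftrightarrow> lless L x y"
proof
  assume "lless L x y" thus "lless (tA2 L) (lab x) (lab y)" using tA2_order assms by blast
next
  assume a: "lless (tA2 L) (lab x) (lab y)"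
  show "lless L x y"
  proof (rule ccontr)
    assume "\<not> lless L x y"
    moreover have "x \<noteq> y" using assms by auto
    ultimately have "lless L y x" using lless_total[OF dist, of x y] assms U_eq by auto
    hence "lless (tA2 L) (lab y) (lab x)" using tA2_order assms by metis
    thus False using a lless_asym[OF dist_tA2] by blast
  qed
qed

end

lemma spos_insert: assumes "finite \<sigma>" "f \<notin> \<sigma>"
  shows "spos L (insert f \<sigma>) x = spos L \<sigma> x + (if lless L f x then 1 else 0)"
proof -
  have "{z \<in> insert f \<sigma>. lless L z x} = (if lless L f x then insert f {z\<in>\<sigma>. lless L z x} else {z\<in>\<sigma>. lless L z x})"
    by auto
  thus ?thesis unfolding spos_def using assms by auto
qed

lemma neg1_odd: "odd (m + n) \<Longrightarrow> (-1::rat) ^ m + (-1) ^ n = 0"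
  by (metis add.inverse_inverse neg_one_even_power neg_one_odd_power odd_add power_minus_Bit0 add.right_inverse
      add_eq_0_iff_both_eq_0 add_cancel_right_right)

context setting
begin

definition dq :: "'n csub set \<Rightarrow> 'n csub set \<Rightarrow> rat" where
  "dq \<sigma> \<tau> = (if x0 \<in> \<sigma> \<and> x0 \<in> \<tau> then dcoef L UNIV \<sigma> \<tau> else 0)"

definition sing :: "'n csub set \<Rightarrow> 'n csub \<Rightarrow> bool" where
  "sing \<sigma> u \<longleftrightarrow> (\<forall>y\<in>\<sigma>. \<forall>z\<in>\<sigma>. y \<in> C u \<longrightarrow> z \<in> C u \<longrightarrow> y = z)"

definition g :: "'n csub set \<Rightarrow> 'n csub \<Rightarrow> 'n csub" where
  "g S y = (if y \<in> A' \<and> lab y \<in> S then fr (lab y) else y)"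

definition Rm :: "'n csub set \<Rightarrow> 'n csub set \<Rightarrow> 'n csub set \<Rightarrow> rat" where
  "Rm S \<sigma> \<tau> = (if x0 \<in> \<sigma> \<and> (\<forall>u\<in>S. sing \<sigma> u) \<and> \<tau> = g S ` \<sigma> then 1 else 0)"

definition hm :: "'n csub \<Rightarrow> 'n csub set \<Rightarrow> 'n csub set \<Rightarrow> rat" where
  "hm u \<sigma> \<tau> = (if x0 \<in> \<sigma> \<and> \<sigma> \<inter> C u \<noteq> {} \<and> fr u \<notin> \<sigma> \<and> \<tau> = insert (fr u) \<sigma>
                 then (-1) ^ spos L \<tau> (fr u) else 0)"

abbreviation "J \<sigma> x \<equiv> join UNIV (\<sigma> - {x}) = join UNIV \<sigma>"

lemma join_insert_class: assumes "x0 \<in> S" "y \<in> S" "lab z = lab y"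
  shows "join W (insert z S) = join W S"
proof -
  have "\<Inter>S \<subseteq> x0 \<inter> y" using assms by auto
  also have "\<dots> \<subseteq> z" using assms(3) unfolding lab_def by auto
  finally show ?thesis unfolding join_def by auto
qed

lemma C_A': "y \<in> C u \<Longrightarrow> y \<in> A'" by (simp add: C_def)
lemma C_lab_eq: "y \<in> C u \<Longrightarrow> lab y = u" by (simp add: C_def)
lemma x0_notC: "x0 \<notin> C u" using x0_notin C_A' by blast

lemma adjacent: assumes u: "u \<in> T" and s: "\<sigma> \<subseteq> U" and f: "fr u \<notin> \<sigma>" and x: "x \<in> \<sigma>" "x \<in> C u"
    and one: "\<And>z. z \<in> \<sigma> \<Longrightarrow> z \<in> C u \<Longrightarrow> z = x"
  shows "spos L (insert (fr u) \<sigma>) x = Suc (spos L (insert (fr u) \<sigma>) (fr u))"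
proof -
  let ?f = "fr u"
  have xf: "x \<noteq> ?f" using f x by auto
  have fx: "lless L ?f x" using fr_props(2)[OF u x(2) xf] .
  have eq: "{z \<in> insert ?f \<sigma>. lless L z x} = insert ?f {z \<in> insert ?f \<sigma>. lless L z ?f}"
  proof (intro set_eqI iffI)
    fix z assume z: "z \<in> {z \<in> insert ?f \<sigma>. lless L z x}"
    show "z \<in> insert ?f {z \<in> insert ?f \<sigma>. lless L z ?f}"
    proof (cases "z = ?f")
      case False
      hence zs: "z \<in> \<sigma>" "lless L z x" using z by auto
      have zU: "z \<in> U" "?f \<in> U" using zs s fr_A'[OF u] U_eq by auto
      have "\<not> lless L ?f z"
      proof
        assume "lless L ?f z"
        hence "z \<in> C u" using fr_between[OF u x(2)] zs by blast
        hence "z = x" using one zs by blast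
        thus False using zs lless_irrefl[OF dist] by blast
      qed
      hence "lless L z ?f" using lless_total[OF dist zU False] by blast
      thus ?thesis using zs by auto
    qed simp
  next
    fix z assume "z \<in> insert ?f {z \<in> insert ?f \<sigma>. lless L z ?f}"
    thus "z \<in> {z \<in> insert ?f \<sigma>. lless L z x}" using fx lless_trans[OF dist] by auto
  qed
  have "finite \<sigma>" using s finite_subset finU by blast
  hence fin: "finite {z \<in> insert ?f \<sigma>. lless L z ?f}" by simp
  have "?f \<notin> {z \<in> insert ?f \<sigma>. lless L z ?f}" using lless_irrefl[OF dist] by auto
  thus ?thesis unfolding spos_def eq using fin by simp
qed

lemma hm_nz: "hm u \<rho> \<tau> \<noteq> 0 \<Longrightarrow> x0 \<in> \<rho>" by (simp add: hm_def split: if_splits)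

lemma sumB: assumes s: "\<sigma> \<subseteq> U" "x0 \<in> \<sigma>"
  shows "(\<Sum>\<rho>\<in>Pow U. dq \<sigma> \<rho> * hm u \<rho> \<tau>) =
     (\<Sum>x\<in>\<sigma>. if J \<sigma> x then (-1) ^ spos L \<sigma> x * hm u (\<sigma> - {x}) \<tau> else 0)"
proof -
  have "(\<Sum>\<rho>\<in>Pow U. dq \<sigma> \<rho> * hm u \<rho> \<tau>) = (\<Sum>\<rho>\<in>Pow U. dcoef L UNIV \<sigma> \<rho> * hm u \<rho> \<tau>)"
    by (rule sum.cong) (auto simp: dq_def s dest: hm_nz)
  thus ?thesis using dsum[OF s(1)] by simp
qed

end

lemma image_idI: "(\<And>y. y \<in> S \<Longrightarrow> f y = y) \<Longrightarrow> f ` S = S" by force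

context setting
begin

lemma sign_pair: assumes "a \<noteq> b" "a \<in> U" "b \<in> U" "finite S" "b \<notin> S" "a \<in> S"
  shows "(-1::rat) ^ spos L (insert b S) b * (-1) ^ spos L (insert b S) a
       + (-1) ^ spos L S a * (-1) ^ spos L (insert b S - {a}) b = 0"
proof -
  have fin: "finite (insert b S)" using assms by simp
  have ai: "a \<in> insert b S" using assms by simp
  have i1: "spos L (insert b S) a = spos L S a + (if lless L b a then 1 else 0)"
    by (rule spos_insert[OF assms(4,5)])
  have i2: "spos L (insert b S - {a}) b = (if lless L a b then spos L (insert b S) b - 1 else spos L (insert b S) b)"
    by (rule spos_remove(1)[OF fin ai])
  show ?thesis
  proof (cases "lless L a b")
    case True
    hence nb: "\<not> lless L b a" using lless_asym[OF dist] by blast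
    have "spos L (insert b S) b \<ge> 2" using spos_remove(2)[OF fin ai True] .
    hence "odd (spos L (insert b S) b + spos L (insert b S) a + (spos L S a + spos L (insert b S - {a}) b))"
      using i1 i2 True nb by auto
    thus ?thesis using neg1_odd by (simp add: power_add[symmetric])
  next
    case False
    hence ba: "lless L b a" using lless_total[OF dist assms(2,3,1)] by blast
    have "odd (spos L (insert b S) b + spos L (insert b S) a + (spos L S a + spos L (insert b S - {a}) b))"
      using i1 i2 False ba by auto
    thus ?thesis using neg1_odd by (simp add: power_add[symmetric])
  qed
qed

lemma homot_step: assumes u: "u \<in> T" and s: "\<sigma> \<subseteq> U" "x0 \<in> \<sigma>"
  shows "(\<Sum>\<rho>\<in>Pow U. hm u \<sigma> \<rho> * dq \<rho> \<tau>) + (\<Sum>\<rho>\<in>Pow U. dq \<sigma> \<rho> * hm u \<rho> \<tau>)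
          = (if \<tau> = \<sigma> then 1 else 0) - Rm {u} \<sigma> \<tau>"
proof -
  let ?f = "fr u"
  have fC: "?f \<in> C u" using fr_props(1)[OF u] .
  have fA: "?f \<in> A'" using fC C_A' by blast
  have fU: "?f \<in> U" using fA U_eq by blast
  have fx0: "?f \<noteq> x0" using fA x0_notin by auto
  have fin: "finite \<sigma>" using s finite_subset finU by blast
  have B: "(\<Sum>\<rho>\<in>Pow U. dq \<sigma> \<rho> * hm u \<rho> \<tau>) =
     (\<Sum>x\<in>\<sigma>. if J \<sigma> x then (-1) ^ spos L \<sigma> x * hm u (\<sigma> - {x}) \<tau> else 0)" by (rule sumB[OF s])
  have gid: "g {u} y = y" if "y \<notin> C u" for y using that unfolding g_def C_def by auto
  have gC: "g {u} y = ?f" if "y \<in> C u" for y using that unfolding g_def C_def by auto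
  show ?thesis
  proof (cases "\<sigma> \<inter> C u = {}")
    case a: True
    have A0: "(\<Sum>\<rho>\<in>Pow U. hm u \<sigma> \<rho> * dq \<rho> \<tau>) = 0" by (simp add: hm_def a)
    have B0: "(\<Sum>\<rho>\<in>Pow U. dq \<sigma> \<rho> * hm u \<rho> \<tau>) = 0"
      unfolding B using a by (intro sum.neutral) (auto simp: hm_def)
    have "g {u} ` \<sigma> = \<sigma>" using a gid by (intro image_idI) auto
    moreover have "sing \<sigma> u" using a unfolding sing_def by auto
    ultimately have "Rm {u} \<sigma> \<tau> = (if \<tau> = \<sigma> then 1 else 0)" by (simp add: Rm_def s)
    thus ?thesis using A0 B0 by simp
  next
    case ne: False
    show ?thesis
    proof (cases "?f \<in> \<sigma>")
      case b: True
      have A0: "(\<Sum>\<rho>\<in>Pow U. hm u \<sigma> \<rho> * dq \<rho> \<tau>) = 0" by (simp add: hm_def b)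
      have B1: "(\<Sum>\<rho>\<in>Pow U. dq \<sigma> \<rho> * hm u \<rho> \<tau>) =
           (if J \<sigma> ?f then (-1) ^ spos L \<sigma> ?f * hm u (\<sigma> - {?f}) \<tau> else 0)"
        unfolding B by (rule sum_single[OF fin b]) (simp add: hm_def b)
      have ins: "insert ?f (\<sigma> - {?f}) = \<sigma>" using b by auto
      show ?thesis
      proof (cases "(\<sigma> - {?f}) \<inter> C u = {}")
        case b2: True
        have "hm u (\<sigma> - {?f}) \<tau> = 0" by (simp add: hm_def b2)
        hence B0: "(\<Sum>\<rho>\<in>Pow U. dq \<sigma> \<rho> * hm u \<rho> \<tau>) = 0" using B1 by simp
        have sg: "sing \<sigma> u" using b2 unfolding sing_def by auto
        have "g {u} ` \<sigma> = \<sigma>"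
        proof -
          have "\<And>y. y \<in> \<sigma> \<Longrightarrow> g {u} y = y" using b2 gid gC by (metis DiffI IntI empty_iff singletonD)
          thus ?thesis by (rule image_idI)
        qed
        hence "Rm {u} \<sigma> \<tau> = (if \<tau> = \<sigma> then 1 else 0)" using sg by (simp add: Rm_def s)
        thus ?thesis using A0 B0 by simp
      next
        case b1: False
        then obtain y where y: "y \<in> \<sigma>" "y \<noteq> ?f" "y \<in> C u" by auto
        have "join UNIV (insert ?f (\<sigma> - {?f})) = join UNIV (\<sigma> - {?f})"
          by (rule join_insert_class[of _ y]) (use s y fx0 fC C_lab_eq in auto)
        hence Jf: "J \<sigma> ?f" using ins by simp
        have hmv: "hm u (\<sigma> - {?f}) \<tau> = (if \<tau> = \<sigma> then (-1) ^ spos L \<sigma> ?f else 0)"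
        proof (cases "\<tau> = \<sigma>")
          case True thus ?thesis using b1 s fx0 ins by (simp add: hm_def)
        next
          case False thus ?thesis using ins by (simp add: hm_def)
        qed
        have "(-1::rat) ^ spos L \<sigma> ?f * (-1) ^ spos L \<sigma> ?f = 1"
          by (simp add: power_add[symmetric])
        hence B1': "(\<Sum>\<rho>\<in>Pow U. dq \<sigma> \<rho> * hm u \<rho> \<tau>) = (if \<tau> = \<sigma> then 1 else 0)"
          using B1 Jf hmv by simp
        have "\<not> sing \<sigma> u" using y b fC unfolding sing_def by blast
        hence "Rm {u} \<sigma> \<tau> = 0" by (simp add: Rm_def)
        thus ?thesis using A0 B1' by simp
      qed
    next
      case c: False
      obtain y0 where y0: "y0 \<in> \<sigma>" "y0 \<in> C u" using ne by auto
      define sp where "sp = insert ?f \<sigma>"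
      have spU: "sp \<in> Pow U" using s fU sp_def by auto
      have jsp: "join UNIV sp = join UNIV \<sigma>"
        unfolding sp_def by (rule join_insert_class[OF s(2) y0(1)]) (use y0 fC C_lab_eq in auto)
      have hz: "hm u \<sigma> \<rho> = 0" if "\<rho> \<noteq> sp" for \<rho> using that by (simp add: hm_def sp_def)
      have hs: "hm u \<sigma> sp = (-1) ^ spos L sp ?f" using c ne s by (simp add: hm_def sp_def)
      have A1: "(\<Sum>\<rho>\<in>Pow U. hm u \<sigma> \<rho> * dq \<rho> \<tau>) = (-1) ^ spos L sp ?f * dq sp \<tau>"
        using sum_single[OF finite_Pow_iff[THEN iffD2, OF finU] spU, of "\<lambda>\<rho>. hm u \<sigma> \<rho> * dq \<rho> \<tau>"] hz hs
        by simp
      define P where "P = (\<lambda>x. if x0 \<in> \<tau> then (-1::rat) ^ spos L sp ?f *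
                 (if \<tau> = sp - {x} \<and> J sp x then (-1) ^ spos L sp x else 0) else 0)"
      define Q where "Q = (\<lambda>x. if J \<sigma> x then (-1::rat) ^ spos L \<sigma> x * hm u (\<sigma> - {x}) \<tau> else 0)"
      define R where "R = (\<lambda>x. if \<sigma> \<inter> C u = {x} then - (if \<tau> = insert ?f (\<sigma> - {x}) then 1 else 0) else (0::rat))"
      have dcsp: "dcoef L UNIV sp \<tau> = (if \<tau> = \<sigma> then (-1) ^ spos L sp ?f else 0) +
           (\<Sum>x\<in>\<sigma>. if \<tau> = sp - {x} \<and> J sp x then (-1) ^ spos L sp x else 0)"
      proof -
        define F where "F = (\<lambda>x. if \<tau> = sp - {x} \<and> J sp x then (-1::rat) ^ spos L sp x else 0)"
        have "dcoef L UNIV sp \<tau> = sum F sp" by (simp add: dcoef_def F_def)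
        also have "\<dots> = F ?f + sum F \<sigma>" unfolding sp_def by (rule sum.insert[OF fin c])
        also have "F ?f = (if \<tau> = \<sigma> then (-1) ^ spos L sp ?f else 0)"
        proof -
          have "sp - {?f} = \<sigma>" using c sp_def by auto
          thus ?thesis unfolding F_def using jsp by simp
        qed
        finally show ?thesis unfolding F_def .
      qed
      have A2: "(\<Sum>\<rho>\<in>Pow U. hm u \<sigma> \<rho> * dq \<rho> \<tau>) = (if \<tau> = \<sigma> then 1 else 0) + (\<Sum>x\<in>\<sigma>. P x)"
      proof (cases "x0 \<in> \<tau>")
        case True
        have "x0 \<in> sp" using s sp_def by auto
        hence "dq sp \<tau> = dcoef L UNIV sp \<tau>" using True by (simp add: dq_def)
        thus ?thesis unfolding A1 dcsp P_def using True
          by (simp add: distrib_left sum_distrib_left power_add[symmetric])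
      next
        case False
        hence "\<tau> \<noteq> \<sigma>" using s by auto
        thus ?thesis unfolding A1 P_def using False by (simp add: dq_def)
      qed
      have PQR: "P x + Q x = R x" if x: "x \<in> \<sigma>" for x
      proof (cases "x = x0")
        case True
        have "P x = 0" unfolding P_def using True by auto
        moreover have "Q x = 0" unfolding Q_def hm_def using True by auto
        moreover have "R x = 0" unfolding R_def using True x0_notC by auto
        ultimately show ?thesis by simp
      next
        case xn0: False
        have xf: "x \<noteq> ?f" using x c by auto
        have spx: "sp - {x} = insert ?f (\<sigma> - {x})" using xf sp_def by auto
        have xU: "x \<in> U" using x s by auto
        show ?thesis
        proof (cases "(\<sigma> - {x}) \<inter> C u = {}")
          case False
          then obtain y1 where y1: "y1 \<in> \<sigma>" "y1 \<noteq> x" "y1 \<in> C u" by auto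
          have R0: "R x = 0" unfolding R_def using y1 by auto
          have jx: "join UNIV (sp - {x}) = join UNIV (\<sigma> - {x})"
            unfolding spx by (rule join_insert_class[of "\<sigma> - {x}" y1]) (use s xn0 y1 fC C_lab_eq in auto)
          have JJ: "J sp x \<longleftrightarrow> J \<sigma> x" using jx jsp by simp
          have hmx: "hm u (\<sigma> - {x}) \<tau> = (if \<tau> = insert ?f (\<sigma> - {x}) then (-1) ^ spos L (insert ?f (\<sigma> - {x})) ?f else 0)"
          proof (cases "\<tau> = insert ?f (\<sigma> - {x})")
            case True thus ?thesis using s xn0 False c by (simp add: hm_def)
          next
            case False thus ?thesis by (simp add: hm_def)
          qed
          have sg: "(-1::rat) ^ spos L sp ?f * (-1) ^ spos L sp x
                 + (-1) ^ spos L \<sigma> x * (-1) ^ spos L (sp - {x}) ?f = 0"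
            unfolding sp_def by (rule sign_pair[OF xf xU fU fin c x])
          show ?thesis
          proof (cases "\<tau> = insert ?f (\<sigma> - {x}) \<and> J \<sigma> x")
            case True
            hence "x0 \<in> \<tau>" using s xn0 by auto
            thus ?thesis unfolding P_def Q_def R0 using True JJ hmx spx sg by simp
          next
            case False
            thus ?thesis unfolding P_def Q_def R0 using JJ hmx spx by simp
          qed
        next
          case True
          have xy0: "x = y0" using True y0 by blast
          hence xC: "x \<in> C u" using y0 by simp
          have one: "\<And>z. z \<in> \<sigma> \<Longrightarrow> z \<in> C u \<Longrightarrow> z = x" using True by blast
          have sC: "\<sigma> \<inter> C u = {x}"
          proof (intro set_eqI iffI)
            fix z assume "z \<in> \<sigma> \<inter> C u" thus "z \<in> {x}" using one by blast
          next
            fix z assume "z \<in> {x}" thus "z \<in> \<sigma> \<inter> C u" using x xC by blast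
          qed
          have Q0: "Q x = 0" unfolding Q_def hm_def using True by simp
          have Jx: "J sp x"
          proof -
            have "x \<in> sp" using x sp_def by simp
            hence "insert x (sp - {x}) = sp" by (rule insert_Diff)
            moreover have "join UNIV (insert x (sp - {x})) = join UNIV (sp - {x})"
              by (rule join_insert_class[of "sp - {x}" ?f])
                 (use s(2) xn0 xf C_lab_eq[OF fC] C_lab_eq[OF xC] in \<open>simp_all add: sp_def\<close>)
            ultimately show ?thesis by simp
          qed
          have adj: "spos L sp x = Suc (spos L sp ?f)" unfolding sp_def
            by (rule adjacent[OF u s(1) c x xC one])
          have "(-1::rat) ^ spos L sp ?f * (-1) ^ spos L sp x = -1"
            using adj by (simp add: power_add[symmetric])
          moreover have "\<tau> = sp - {x} \<Longrightarrow> x0 \<in> \<tau>" using s(2) xn0 by (simp add: sp_def)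
          ultimately show ?thesis unfolding P_def R_def using Q0 Jx sC spx
            by (cases "\<tau> = sp - {x}") simp_all
        qed
      qed
      have sumR: "(\<Sum>x\<in>\<sigma>. R x) = - Rm {u} \<sigma> \<tau>"
      proof (cases "sing \<sigma> u")
        case True
        have one0: "z = y0" if "z \<in> \<sigma>" "z \<in> C u" for z using True y0 that unfolding sing_def by blast
        have sC: "\<sigma> \<inter> C u = {y0}"
        proof (intro set_eqI iffI)
          fix z assume "z \<in> \<sigma> \<inter> C u" thus "z \<in> {y0}" using one0 by blast
        next
          fix z assume "z \<in> {y0}" thus "z \<in> \<sigma> \<inter> C u" using y0 by blast
        qed
        have "(\<Sum>x\<in>\<sigma>. R x) = R y0" by (rule sum_single[OF fin y0(1)]) (simp add: R_def sC)
        moreover have "g {u} ` \<sigma> = insert ?f (\<sigma> - {y0})"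
        proof -
          have "g {u} ` \<sigma> = insert (g {u} y0) (g {u} ` (\<sigma> - {y0}))" using y0 by (metis image_insert insert_Diff)
          moreover have "g {u} ` (\<sigma> - {y0}) = \<sigma> - {y0}"
          proof -
            have "g {u} y = y" if "y \<in> \<sigma> - {y0}" for y
            proof -
              have "y \<notin> C u" using one0 that by blast
              thus ?thesis by (rule gid)
            qed
            thus ?thesis by (rule image_idI)
          qed
          ultimately show ?thesis using gC y0 by simp
        qed
        ultimately show ?thesis unfolding R_def Rm_def using True sC s by simp
      next
        case False
        have "\<sigma> \<inter> C u \<noteq> {x}" for x
        proof
          assume "\<sigma> \<inter> C u = {x}"
          hence "sing \<sigma> u" unfolding sing_def by (metis IntI singletonD)
          thus False using False by simp
        qed
        hence "(\<Sum>x\<in>\<sigma>. R x) = 0" unfolding R_def by simp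
        thus ?thesis using False by (simp add: Rm_def)
      qed
      have "(\<Sum>\<rho>\<in>Pow U. hm u \<sigma> \<rho> * dq \<rho> \<tau>) + (\<Sum>\<rho>\<in>Pow U. dq \<sigma> \<rho> * hm u \<rho> \<tau>)
            = (if \<tau> = \<sigma> then 1 else 0) + (\<Sum>x\<in>\<sigma>. P x + Q x)"
        unfolding A2 B Q_def[symmetric] by (simp add: sum.distrib)
      also have "\<dots> = (if \<tau> = \<sigma> then 1 else 0) + (\<Sum>x\<in>\<sigma>. R x)" using PQR by (simp cong: sum.cong)
      finally show ?thesis using sumR by simp
    qed
  qed
qed

end

lemma lin_madd: "lin V (\<lambda>\<sigma> \<tau>. M \<sigma> \<tau> + N \<sigma> \<tau>) c = (\<lambda>\<tau>. lin V M c \<tau> + lin V N c \<tau>)"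
  by (simp add: lin_def distrib_left sum.distrib)

lemma dcoef_nz: assumes "dcoef L W \<sigma> \<tau> \<noteq> 0"
  shows "\<exists>x\<in>\<sigma>. \<tau> = \<sigma> - {x} \<and> join W (\<sigma> - {x}) = join W \<sigma>"
proof (rule ccontr)
  assume n: "\<not> ?thesis"
  have "\<And>x. x \<in> \<sigma> \<Longrightarrow> \<not> (\<tau> = \<sigma> - {x} \<and> join W (\<sigma> - {x}) = join W \<sigma>)" using n by blast
  hence "dcoef L W \<sigma> \<tau> = 0" unfolding dcoef_def by (intro sum.neutral) simp
  thus False using assms by simp
qed

lemma sdeg_remove: assumes "finite \<sigma>" "x \<in> \<sigma>" "join W (\<sigma> - {x}) = join W \<sigma>"
  shows "sdeg W (\<sigma> - {x}) = sdeg W \<sigma> + 1"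
proof -
  have "card \<sigma> > 0" using assms card_gt_0_iff by blast
  hence "card \<sigma> \<ge> 1" by simp
  hence "int (card (\<sigma> - {x})) = int (card \<sigma>) - 1" using assms by (simp add: of_nat_diff)
  thus ?thesis unfolding sdeg_def using assms(3) by simp
qed

lemma sdeg_insert: assumes "finite \<sigma>" "x \<notin> \<sigma>" "join W (insert x \<sigma>) = join W \<sigma>"
  shows "sdeg W (insert x \<sigma>) = sdeg W \<sigma> - 1"
  unfolding sdeg_def using assms by simp

context setting
begin

definition Qco :: "('n csub set \<Rightarrow> rat) set" where
  "Qco = {c. \<forall>\<sigma>. c \<sigma> \<noteq> 0 \<longrightarrow> \<sigma> \<subseteq> U \<and> x0 \<in> \<sigma>}"

definition Qh :: "int \<Rightarrow> ('n csub set \<Rightarrow> rat) set" where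
  "Qh k = {c \<in> Qco. \<forall>\<sigma>. c \<sigma> \<noteq> 0 \<longrightarrow> sdeg UNIV \<sigma> = k}"

lemma Qh_Qco: "c \<in> Qh k \<Longrightarrow> c \<in> Qco" by (simp add: Qh_def)

lemma Qh_I: assumes "\<And>\<tau>. c \<tau> \<noteq> 0 \<Longrightarrow> \<tau> \<subseteq> U \<and> x0 \<in> \<tau> \<and> sdeg UNIV \<tau> = k" shows "c \<in> Qh k"
  using assms by (auto simp: Qh_def Qco_def)

lemma Qco_I: assumes "\<And>\<tau>. c \<tau> \<noteq> 0 \<Longrightarrow> \<tau> \<subseteq> U \<and> x0 \<in> \<tau>" shows "c \<in> Qco"
  using assms by (auto simp: Qco_def)

lemma lin_Qh: assumes "\<And>\<sigma> \<tau>. \<sigma> \<subseteq> U \<Longrightarrow> x0 \<in> \<sigma> \<Longrightarrow> M \<sigma> \<tau> \<noteq> 0 \<Longrightarrow> \<tau> \<subseteq> U \<and> x0 \<in> \<tau> \<and> sdeg UNIV \<tau> = sdeg UNIV \<sigma> + e"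
    and "c \<in> Qh k"
  shows "lin U M c \<in> Qh (k + e)"
proof (rule Qh_I)
  fix \<tau> assume "lin U M c \<tau> \<noteq> 0"
  then obtain \<sigma> where s: "\<sigma> \<subseteq> U" "c \<sigma> \<noteq> 0" "M \<sigma> \<tau> \<noteq> 0" using lin_nz by blast
  have "x0 \<in> \<sigma>" "sdeg UNIV \<sigma> = k" using assms(2) s(2) by (auto simp: Qh_def Qco_def)
  thus "\<tau> \<subseteq> U \<and> x0 \<in> \<tau> \<and> sdeg UNIV \<tau> = k + e" using assms(1)[OF s(1) _ s(3)] by simp
qed

lemma lin_Qco: assumes "\<And>\<sigma> \<tau>. \<sigma> \<subseteq> U \<Longrightarrow> x0 \<in> \<sigma> \<Longrightarrow> M \<sigma> \<tau> \<noteq> 0 \<Longrightarrow> \<tau> \<subseteq> U \<and> x0 \<in> \<tau>"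
    and "c \<in> Qco"
  shows "lin U M c \<in> Qco"
proof (rule Qco_I)
  fix \<tau> assume "lin U M c \<tau> \<noteq> 0"
  then obtain \<sigma> where s: "\<sigma> \<subseteq> U" "c \<sigma> \<noteq> 0" "M \<sigma> \<tau> \<noteq> 0" using lin_nz by blast
  have "x0 \<in> \<sigma>" using assms(2) s(2) by (auto simp: Qco_def)
  thus "\<tau> \<subseteq> U \<and> x0 \<in> \<tau>" using assms(1)[OF s(1) _ s(3)] by simp
qed

lemma finS: "\<sigma> \<subseteq> U \<Longrightarrow> finite \<sigma>" using finite_subset finU by blast

lemma dq_nz: assumes "\<sigma> \<subseteq> U" "dq \<sigma> \<tau> \<noteq> 0"
  shows "\<tau> \<subseteq> U \<and> x0 \<in> \<tau> \<and> sdeg UNIV \<tau> = sdeg UNIV \<sigma> + 1"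
proof -
  have x: "x0 \<in> \<tau>" "dcoef L UNIV \<sigma> \<tau> \<noteq> 0" using assms(2) by (simp_all add: dq_def split: if_splits)
  then obtain x where xx: "x \<in> \<sigma>" "\<tau> = \<sigma> - {x}" "join UNIV (\<sigma> - {x}) = join UNIV \<sigma>" using dcoef_nz by blast
  have "\<tau> \<subseteq> U" using xx(2) assms(1) by blast
  thus ?thesis using x(1) xx sdeg_remove[OF finS[OF assms(1)] xx(1) xx(3)] by simp
qed

lemma hm_nz2: assumes u: "u \<in> T" and "\<sigma> \<subseteq> U" "hm u \<sigma> \<tau> \<noteq> 0"
  shows "\<tau> \<subseteq> U \<and> x0 \<in> \<tau> \<and> sdeg UNIV \<tau> = sdeg UNIV \<sigma> + (-1)"
proof -
  have h: "x0 \<in> \<sigma>" "\<sigma> \<inter> C u \<noteq> {}" "fr u \<notin> \<sigma>" "\<tau> = insert (fr u) \<sigma>"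
    using assms(3) by (simp_all add: hm_def split: if_splits)
  then obtain y where y: "y \<in> \<sigma>" "y \<in> C u" by blast
  have j: "join UNIV (insert (fr u) \<sigma>) = join UNIV \<sigma>"
    by (rule join_insert_class[OF h(1) y(1)]) (simp add: C_lab_eq[OF y(2)] C_lab_eq[OF fr_props(1)[OF u]])
  have fU: "fr u \<in> U" using fr_A'[OF u] U_eq by blast
  show ?thesis using sdeg_insert[OF finS[OF assms(2)] h(3) j] h(1,4) assms(2) fU by simp
qed

lemma dd_op: "lin U dq (lin U dq c) = (\<lambda>_. 0)"
proof -
  have "lin U dq (lin U dq c) = lin U (\<lambda>\<sigma> \<tau>. \<Sum>\<rho>\<in>Pow U. dq \<sigma> \<rho> * dq \<rho> \<tau>) c" by (rule lin_comp)
  also have "\<dots> = lin U (\<lambda>\<sigma> \<tau>. 0) c"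
  proof (rule ext, rule lin_cong)
    fix \<sigma> \<tau> assume s: "\<sigma> \<subseteq> U"
    show "(\<Sum>\<rho>\<in>Pow U. dq \<sigma> \<rho> * dq \<rho> \<tau>) = 0"
    proof (cases "x0 \<in> \<sigma> \<and> x0 \<in> \<tau>")
      case True
      have "(\<Sum>\<rho>\<in>Pow U. dq \<sigma> \<rho> * dq \<rho> \<tau>) = (\<Sum>\<rho>\<in>Pow U. dcoef L UNIV \<sigma> \<rho> * dcoef L UNIV \<rho> \<tau>)"
      proof (rule sum.cong[OF refl])
        fix \<rho> assume "\<rho> \<in> Pow U"
        show "dq \<sigma> \<rho> * dq \<rho> \<tau> = dcoef L UNIV \<sigma> \<rho> * dcoef L UNIV \<rho> \<tau>"
        proof (cases "x0 \<in> \<rho>")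
          case True thus ?thesis using \<open>x0 \<in> \<sigma> \<and> x0 \<in> \<tau>\<close> by (simp add: dq_def)
        next
          case False
          have "dcoef L UNIV \<rho> \<tau> = 0"
          proof (rule ccontr)
            assume "dcoef L UNIV \<rho> \<tau> \<noteq> 0"
            then obtain x where "\<tau> = \<rho> - {x}" using dcoef_nz by blast
            thus False using False \<open>x0 \<in> \<sigma> \<and> x0 \<in> \<tau>\<close> by simp
          qed
          thus ?thesis using False by (simp add: dq_def)
        qed
      qed
      also have "\<dots> = 0" by (rule dd_zero[OF dist s])
      finally show ?thesis .
    next
      case False thus ?thesis by (auto simp: dq_def intro!: sum.neutral)
    qed
  qed
  also have "\<dots> = (\<lambda>_. 0)" by (simp add: lin_def)
  finally show ?thesis .
qed

lemma homot_op: assumes u: "u \<in> T" and b: "b \<in> Qco"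
  shows "(\<lambda>\<tau>. lin U dq (lin U (hm u) b) \<tau> + lin U (hm u) (lin U dq b) \<tau>) = (\<lambda>\<tau>. b \<tau> - lin U (Rm {u}) b \<tau>)"
proof -
  have "(\<lambda>\<tau>. lin U dq (lin U (hm u) b) \<tau> + lin U (hm u) (lin U dq b) \<tau>) =
     lin U (\<lambda>\<sigma> \<tau>. (\<Sum>\<rho>\<in>Pow U. hm u \<sigma> \<rho> * dq \<rho> \<tau>) + (\<Sum>\<rho>\<in>Pow U. dq \<sigma> \<rho> * hm u \<rho> \<tau>)) b"
    by (simp add: lin_madd lin_comp)
  also have "\<dots> = lin U (\<lambda>\<sigma> \<tau>. (if \<tau> = \<sigma> then 1 else 0) - Rm {u} \<sigma> \<tau>) b"
  proof (rule ext, rule lin_cong)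
    fix \<sigma> \<tau> assume "\<sigma> \<subseteq> U" "b \<sigma> \<noteq> 0"
    hence "x0 \<in> \<sigma>" using b by (auto simp: Qco_def)
    thus "(\<Sum>\<rho>\<in>Pow U. hm u \<sigma> \<rho> * dq \<rho> \<tau>) + (\<Sum>\<rho>\<in>Pow U. dq \<sigma> \<rho> * hm u \<rho> \<tau>) =
          (if \<tau> = \<sigma> then 1 else 0) - Rm {u} \<sigma> \<tau>" using homot_step[OF u \<open>\<sigma> \<subseteq> U\<close>] by simp
  qed
  also have "\<dots> = (\<lambda>\<tau>. b \<tau> - lin U (Rm {u}) b \<tau>)"
  proof -
    have "lin U (\<lambda>\<sigma> \<tau>. (if \<tau> = \<sigma> then 1 else 0) - Rm {u} \<sigma> \<tau>) b =
          lin U (\<lambda>\<sigma> \<tau>. (if \<tau> = \<sigma> then 1 else 0) + (- Rm {u} \<sigma> \<tau>)) b" by simp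
    also have "\<dots> = (\<lambda>\<tau>. lin U (\<lambda>\<sigma> \<tau>. if \<tau> = \<sigma> then 1 else 0) b \<tau> + lin U (\<lambda>\<sigma> \<tau>. - Rm {u} \<sigma> \<tau>) b \<tau>)"
      by (rule lin_madd)
    also have "\<dots> = (\<lambda>\<tau>. b \<tau> - lin U (Rm {u}) b \<tau>)"
    proof (rule ext)
      fix \<tau>
      have "lin U (\<lambda>\<sigma> \<tau>. if \<tau> = \<sigma> then 1 else 0) b \<tau> = b \<tau>"
        by (rule lin_id[OF finU]) (use b in \<open>auto simp: Qco_def\<close>)
      moreover have "lin U (\<lambda>\<sigma> \<tau>. - Rm {u} \<sigma> \<tau>) b \<tau> = - lin U (Rm {u}) b \<tau>"
        by (simp add: lin_def sum_negf)
      ultimately show "lin U (\<lambda>\<sigma> \<tau>. if \<tau> = \<sigma> then 1 else 0) b \<tau> + lin U (\<lambda>\<sigma> \<tau>. - Rm {u} \<sigma> \<tau>) b \<tau>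
          = b \<tau> - lin U (Rm {u}) b \<tau>" by simp
    qed
    finally show ?thesis .
  qed
  finally show ?thesis .
qed

end

context setting
begin

lemma g_x0: "g S x0 = x0" using x0_notin by (simp add: g_def)

lemma lab_g: "y \<in> U \<Longrightarrow> lab (g S y) = lab y"
  unfolding g_def using lab_fr lab_T by auto

lemma g_U: "y \<in> U \<Longrightarrow> g S y \<in> U"
  unfolding g_def using fr_A' lab_T U_eq by auto

lemma g_A'_other: "y \<in> A' \<Longrightarrow> lab y \<notin> S \<Longrightarrow> g S y = y" by (simp add: g_def)

lemma g_inj: assumes s: "\<sigma> \<subseteq> U" and sg: "\<forall>u\<in>S. sing \<sigma> u"
  shows "inj_on (g S) \<sigma>"
proof (rule inj_onI)
  fix y z assume y: "y \<in> \<sigma>" and z: "z \<in> \<sigma>" and e: "g S y = g S z"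
  have yU: "y \<in> U" "z \<in> U" using y z s by auto
  have le: "lab y = lab z" using lab_g[OF yU(1), of S] lab_g[OF yU(2), of S] e by simp
  show "y = z"
  proof (cases "y \<in> A' \<and> lab y \<in> S")
    case True
    hence zA: "z \<in> A'"
    proof -
      have "z \<noteq> x0"
      proof
        assume "z = x0"
        hence "g S y = x0" using e g_x0 by simp
        moreover have "g S y = fr (lab y)" using True by (simp add: g_def)
        moreover have "fr (lab y) \<in> A'" using fr_A' lab_T True by blast
        ultimately show False using x0_notin by simp
      qed
      thus ?thesis using yU U_eq by blast
    qed
    have "y \<in> C (lab y)" "z \<in> C (lab y)" using True zA le by (simp_all add: C_def)
    thus ?thesis using sg True y z unfolding sing_def by blast
  next
    case False
    have gy: "g S y = y" unfolding g_def using False by (rule if_not_P)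
    show ?thesis
    proof (cases "z \<in> A' \<and> lab z \<in> S")
      case True
      have "y \<noteq> x0"
      proof
        assume "y = x0"
        hence "g S z = x0" using e g_x0 by simp
        moreover have "g S z = fr (lab z)" using True by (simp add: g_def)
        moreover have "fr (lab z) \<in> A'" using fr_A' lab_T True by blast
        ultimately show False using x0_notin by simp
      qed
      hence "y \<in> A'" using yU U_eq by blast
      thus ?thesis using False True le by simp
    next
      case False
      have "g S z = z" unfolding g_def using False by (rule if_not_P)
      thus ?thesis using gy e by simp
    qed
  qed
qed

lemma join_lab: assumes "x0 \<in> \<sigma>" shows "join UNIV \<sigma> = \<Inter> (lab ` \<sigma>)"
proof (intro set_eqI iffI)
  fix v assume "v \<in> join UNIV \<sigma>"
  thus "v \<in> \<Inter> (lab ` \<sigma>)" using assms by (auto simp: join_def lab_def)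
next
  fix v assume v: "v \<in> \<Inter> (lab ` \<sigma>)"
  show "v \<in> join UNIV \<sigma>" unfolding join_def
  proof (intro IntI UNIV_I InterI)
    fix y assume "y \<in> \<sigma>"
    hence "lab y \<in> lab ` \<sigma>" by blast
    hence "v \<in> lab y" using v by blast
    thus "v \<in> y" by (simp add: lab_def)
  qed
qed

lemma Rm_nz: assumes S: "S \<subseteq> T" and s: "\<sigma> \<subseteq> U" and nz: "Rm S \<sigma> \<tau> \<noteq> 0"
  shows "\<tau> \<subseteq> U \<and> x0 \<in> \<tau> \<and> sdeg UNIV \<tau> = sdeg UNIV \<sigma> + 0"
proof -
  have h: "x0 \<in> \<sigma>" "\<forall>u\<in>S. sing \<sigma> u" "\<tau> = g S ` \<sigma>" using nz by (simp_all add: Rm_def split: if_splits)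
  have tU: "\<tau> \<subseteq> U" using h(3) s g_U by blast
  have x0t: "x0 \<in> \<tau>" using h(1,3) g_x0 by (metis image_eqI)
  have lt: "lab ` \<tau> = lab ` \<sigma>"
  proof -
    have "lab ` \<tau> = (lab \<circ> g S) ` \<sigma>" using h(3) by (simp add: image_comp)
    also have "\<dots> = lab ` \<sigma>" using lab_g s by (intro image_cong) auto
    finally show ?thesis .
  qed
  have j: "join UNIV \<tau> = join UNIV \<sigma>" using join_lab[OF x0t] join_lab[OF h(1)] lt by simp
  have c: "card \<tau> = card \<sigma>" using h(3) card_image[OF g_inj[OF s h(2)]] by simp
  show ?thesis using tU x0t j c by (simp add: sdeg_def)
qed

lemma Rm_empty: "Rm {} \<sigma> \<tau> = (if x0 \<in> \<sigma> \<and> \<tau> = \<sigma> then 1 else 0)"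
proof -
  have "g {} ` \<sigma> = \<sigma>" by (rule image_idI) (simp add: g_def)
  thus ?thesis by (simp add: Rm_def)
qed

lemma g_comp: assumes u: "u \<notin> S" and y: "y \<in> U"
  shows "g {u} (g S y) = g (insert u S) y"
proof (cases "y \<in> A'")
  case False
  thus ?thesis unfolding g_def using y by auto
next
  case yA: True
  show ?thesis
  proof (cases "lab y \<in> S")
    case True
    have "lab y \<in> T" using lab_T yA by blast
    hence "fr (lab y) \<in> A'" "lab (fr (lab y)) = lab y" using fr_A' lab_fr by auto
    thus ?thesis using True yA u unfolding g_def by auto
  next
    case False
    thus ?thesis using yA unfolding g_def by auto
  qed
qed

lemma sing_Int: "\<sigma> \<inter> C u = \<sigma>' \<inter> C u \<Longrightarrow> sing \<sigma> u = sing \<sigma>' u"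
  unfolding sing_def by (metis IntD1 IntD2 IntI)

lemma gS_C: assumes u: "u \<notin> S" and s: "\<sigma> \<subseteq> U"
  shows "g S ` \<sigma> \<inter> C u = \<sigma> \<inter> C u"
proof (intro set_eqI iffI)
  fix z assume "z \<in> g S ` \<sigma> \<inter> C u"
  then obtain y where y: "y \<in> \<sigma>" "z = g S y" "z \<in> C u" by blast
  have yU: "y \<in> U" using y s by blast
  have "lab y = u" using lab_g[OF yU, of S] y C_lab_eq by simp
  hence "g S y = y" using u by (simp add: g_def)
  thus "z \<in> \<sigma> \<inter> C u" using y by simp
next
  fix z assume z: "z \<in> \<sigma> \<inter> C u"
  have "lab z = u" using z C_lab_eq by blast
  hence "g S z = z" using u by (simp add: g_def)
  thus "z \<in> g S ` \<sigma> \<inter> C u" using z by (metis IntD1 IntD2 IntI image_eqI)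
qed

lemma Rm_comp: assumes u: "u \<notin> S" and s: "\<sigma> \<subseteq> U"
  shows "(\<Sum>\<rho>\<in>Pow U. Rm S \<sigma> \<rho> * Rm {u} \<rho> \<tau>) = Rm (insert u S) \<sigma> \<tau>"
proof -
  have gU: "g S ` \<sigma> \<in> Pow U" using s g_U by blast
  have "(\<Sum>\<rho>\<in>Pow U. Rm S \<sigma> \<rho> * Rm {u} \<rho> \<tau>) = Rm S \<sigma> (g S ` \<sigma>) * Rm {u} (g S ` \<sigma>) \<tau>"
    by (rule sum_single[OF finite_Pow_iff[THEN iffD2, OF finU] gU]) (simp add: Rm_def)
  also have "\<dots> = Rm (insert u S) \<sigma> \<tau>"
  proof -
    have im: "g {u} ` (g S ` \<sigma>) = g (insert u S) ` \<sigma>"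
      unfolding image_image by (rule image_cong[OF refl]) (use g_comp[OF u] s in blast)
    have sg: "sing (g S ` \<sigma>) u = sing \<sigma> u" using sing_Int[OF gS_C[OF u s]] .
    have x0: "x0 \<in> \<sigma> \<Longrightarrow> x0 \<in> g S ` \<sigma>" using g_x0 by (metis image_eqI)
    show ?thesis
    proof (cases "x0 \<in> \<sigma> \<and> (\<forall>v\<in>S. sing \<sigma> v)")
      case True
      have "Rm S \<sigma> (g S ` \<sigma>) = 1" using True by (simp add: Rm_def)
      moreover have "Rm {u} (g S ` \<sigma>) \<tau> = (if sing \<sigma> u \<and> \<tau> = g (insert u S) ` \<sigma> then 1 else 0)"
        using True x0 sg im by (simp add: Rm_def)
      moreover have "Rm (insert u S) \<sigma> \<tau> = (if sing \<sigma> u \<and> \<tau> = g (insert u S) ` \<sigma> then 1 else 0)"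
        using True by (simp add: Rm_def)
      ultimately show ?thesis by simp
    next
      case False
      have "Rm S \<sigma> (g S ` \<sigma>) = 0" using False by (simp add: Rm_def)
      moreover have "Rm (insert u S) \<sigma> \<tau> = 0" using False by (simp add: Rm_def)
      ultimately show ?thesis by simp
    qed
  qed
  finally show ?thesis .
qed

lemma dq_Qco: "c \<in> Qco \<Longrightarrow> lin U dq c \<in> Qco"
  by (rule lin_Qco) (use dq_nz in blast)

lemma dq_Qh: "c \<in> Qh k \<Longrightarrow> lin U dq c \<in> Qh (k + 1)"
  by (rule lin_Qh) (use dq_nz in blast)

lemma Rm_Qh: "S \<subseteq> T \<Longrightarrow> c \<in> Qh k \<Longrightarrow> lin U (Rm S) c \<in> Qh (k + 0)"
  by (rule lin_Qh) (use Rm_nz in blast)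

lemma Rm_Qco: "S \<subseteq> T \<Longrightarrow> c \<in> Qco \<Longrightarrow> lin U (Rm S) c \<in> Qco"
  by (rule lin_Qco) (use Rm_nz in blast)

lemma hm_Qh: "u \<in> T \<Longrightarrow> c \<in> Qh k \<Longrightarrow> lin U (hm u) c \<in> Qh (k + (-1))"
  by (rule lin_Qh) (use hm_nz2 in blast)

lemma hm_Qco: "u \<in> T \<Longrightarrow> c \<in> Qco \<Longrightarrow> lin U (hm u) c \<in> Qco"
  by (rule lin_Qco) (use hm_nz2 in blast)

lemma Qco_add: assumes "a \<in> Qco" "b \<in> Qco" shows "(\<lambda>\<tau>. a \<tau> + b \<tau>) \<in> Qco"
proof (rule Qco_I)
  fix \<tau> assume "a \<tau> + b \<tau> \<noteq> 0"
  hence "a \<tau> \<noteq> 0 \<or> b \<tau> \<noteq> 0" by auto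
  thus "\<tau> \<subseteq> U \<and> x0 \<in> \<tau>" using assms unfolding Qco_def by blast
qed

lemma Qh_add: assumes "a \<in> Qh k" "b \<in> Qh k" shows "(\<lambda>\<tau>. a \<tau> + b \<tau>) \<in> Qh k"
proof (rule Qh_I)
  fix \<tau> assume "a \<tau> + b \<tau> \<noteq> 0"
  hence "a \<tau> \<noteq> 0 \<or> b \<tau> \<noteq> 0" by auto
  thus "\<tau> \<subseteq> U \<and> x0 \<in> \<tau> \<and> sdeg UNIV \<tau> = k" using assms unfolding Qh_def Qco_def by blast
qed

end

context setting
begin

definition homot :: "'n csub set \<Rightarrow> (('n csub set \<Rightarrow> rat) \<Rightarrow> ('n csub set \<Rightarrow> rat)) \<Rightarrow> bool" where
  "homot S H \<longleftrightarrow> (\<forall>c\<in>Qco. H c \<in> Qco \<and>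
       (\<lambda>\<tau>. lin U dq (H c) \<tau> + H (lin U dq c) \<tau>) = (\<lambda>\<tau>. c \<tau> - lin U (Rm S) c \<tau>))
     \<and> H (\<lambda>_. 0) = (\<lambda>_. 0) \<and> (\<forall>k. \<forall>c\<in>Qh k. H c \<in> Qh (k - 1))"

lemma chain_from_homot: assumes hH: "homot S H" and c: "c \<in> Qco"
  shows "lin U dq (lin U (Rm S) c) = lin U (Rm S) (lin U dq c)"
proof -
  let ?d = "lin U dq" and ?R = "lin U (Rm S)"
  have dc: "?d c \<in> Qco" using dq_Qco[OF c] .
  have e1: "(\<lambda>\<tau>. ?d (H c) \<tau> + H (?d c) \<tau>) = (\<lambda>\<tau>. c \<tau> - ?R c \<tau>)" using hH c by (simp add: homot_def)
  have e2: "(\<lambda>\<tau>. ?d (H (?d c)) \<tau> + H (?d (?d c)) \<tau>) = (\<lambda>\<tau>. ?d c \<tau> - ?R (?d c) \<tau>)"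
    using hH dc by (simp add: homot_def)
  have H0: "H (?d (?d c)) = (\<lambda>_. 0)" using hH dd_op by (simp add: homot_def)
  have Rc: "?R c = (\<lambda>\<tau>. c \<tau> - ?d (H c) \<tau> - H (?d c) \<tau>)"
  proof (rule ext)
    fix \<tau> show "?R c \<tau> = c \<tau> - ?d (H c) \<tau> - H (?d c) \<tau>" using fun_cong[OF e1, of \<tau>] by simp
  qed
  have Rdc: "?R (?d c) = (\<lambda>\<tau>. ?d c \<tau> - ?d (H (?d c)) \<tau>)"
  proof (rule ext)
    fix \<tau> show "?R (?d c) \<tau> = ?d c \<tau> - ?d (H (?d c)) \<tau>" using fun_cong[OF e2, of \<tau>] H0 by simp
  qed
  have "?d (?R c) = (\<lambda>\<tau>. ?d c \<tau> - ?d (?d (H c)) \<tau> - ?d (H (?d c)) \<tau>)"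
    unfolding Rc by (simp add: lin_diff)
  also have "\<dots> = (\<lambda>\<tau>. ?d c \<tau> - ?d (H (?d c)) \<tau>)" using dd_op by simp
  finally show ?thesis using Rdc by simp
qed

lemma homotopy_exists: assumes "S \<subseteq> T" shows "\<exists>H. homot S H"
proof -
  have "finite S" using assms finite_subset by blast
  thus ?thesis using assms
  proof (induction S rule: finite_induct)
    case empty
    have "homot {} (\<lambda>c. (\<lambda>_. 0))"
      unfolding homot_def
    proof (intro conjI ballI allI)
      fix c :: "'n csub set \<Rightarrow> rat" assume c: "c \<in> Qco"
      show "(\<lambda>_. 0) \<in> Qco" by (simp add: Qco_def)
      show "(\<lambda>\<tau>. lin U dq (\<lambda>_. 0) \<tau> + 0) = (\<lambda>\<tau>. c \<tau> - lin U (Rm {}) c \<tau>)"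
      proof (rule ext)
        fix \<tau>
        have "lin U (Rm {}) c \<tau> = lin U (\<lambda>\<sigma> \<tau>. if \<tau> = \<sigma> then 1 else 0) c \<tau>"
          by (rule lin_cong) (use c in \<open>auto simp: Rm_empty Qco_def\<close>)
        also have "\<dots> = c \<tau>" by (rule lin_id[OF finU]) (use c in \<open>auto simp: Qco_def\<close>)
        finally show "lin U dq (\<lambda>_. 0) \<tau> + 0 = c \<tau> - lin U (Rm {}) c \<tau>" by (simp add: lin_zero)
      qed
    next
      fix k :: int and c :: "'n csub set \<Rightarrow> rat"
      show "(\<lambda>_. 0) \<in> Qh (k - 1)" by (simp add: Qh_def Qco_def)
    qed simp
    thus ?case by blast
  next
    case (insert u F)
    have u: "u \<in> T" "u \<notin> F" and F: "F \<subseteq> T" using insert by auto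
    obtain H where hH: "homot F H" using insert F by blast
    let ?d = "lin U dq" and ?R = "lin U (Rm F)" and ?h = "lin U (hm u)" and ?R' = "lin U (Rm (insert u F))"
    define H' where "H' = (\<lambda>c \<tau>. H c \<tau> + ?h (?R c) \<tau>)"
    have "homot (insert u F) H'"
      unfolding homot_def
    proof (intro conjI ballI allI)
      fix c assume c: "c \<in> Qco"
      have Hc: "H c \<in> Qco" using hH c by (simp add: homot_def)
      have Rc: "?R c \<in> Qco" using Rm_Qco[OF F c] .
      show "H' c \<in> Qco" unfolding H'_def using Qco_add[OF Hc hm_Qco[OF u(1) Rc]] .
      have e1: "(\<lambda>\<tau>. ?d (H c) \<tau> + H (?d c) \<tau>) = (\<lambda>\<tau>. c \<tau> - ?R c \<tau>)" using hH c by (simp add: homot_def)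
      have ch: "?d (?R c) = ?R (?d c)" by (rule chain_from_homot[OF hH c])
      have ho: "(\<lambda>\<tau>. ?d (?h (?R c)) \<tau> + ?h (?d (?R c)) \<tau>) = (\<lambda>\<tau>. ?R c \<tau> - lin U (Rm {u}) (?R c) \<tau>)"
        by (rule homot_op[OF u(1) Rc])
      have comp: "lin U (Rm {u}) (?R c) = ?R' c"
      proof -
        have "lin U (Rm {u}) (?R c) = lin U (\<lambda>\<sigma> \<tau>. \<Sum>\<rho>\<in>Pow U. Rm F \<sigma> \<rho> * Rm {u} \<rho> \<tau>) c" by (rule lin_comp)
        also have "\<dots> = ?R' c"
          by (rule ext, rule lin_cong) (use Rm_comp[OF u(2)] in simp)
        finally show ?thesis .
      qed
      show "(\<lambda>\<tau>. ?d (H' c) \<tau> + H' (?d c) \<tau>) = (\<lambda>\<tau>. c \<tau> - ?R' c \<tau>)"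
      proof (rule ext)
        fix \<tau>
        have a1: "?d (H' c) \<tau> = ?d (H c) \<tau> + ?d (?h (?R c)) \<tau>" unfolding H'_def by (simp add: lin_add)
        have a2: "H' (?d c) \<tau> = H (?d c) \<tau> + ?h (?d (?R c)) \<tau>" unfolding H'_def ch by simp
        have b1: "?d (H c) \<tau> + H (?d c) \<tau> = c \<tau> - ?R c \<tau>" using fun_cong[OF e1, of \<tau>] by simp
        have b2: "?d (?h (?R c)) \<tau> + ?h (?d (?R c)) \<tau> = ?R c \<tau> - ?R' c \<tau>" using fun_cong[OF ho, of \<tau>] comp by simp
        show "?d (H' c) \<tau> + H' (?d c) \<tau> = c \<tau> - ?R' c \<tau>" using a1 a2 b1 b2 by simp
      qed
    next
      have "H (\<lambda>_. 0) = (\<lambda>_. 0)" using hH by (simp add: homot_def)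
      thus "H' (\<lambda>_. 0) = (\<lambda>_. 0)" unfolding H'_def by (simp add: lin_zero)
    next
      fix k and c assume c: "c \<in> Qh k"
      have Hc: "H c \<in> Qh (k - 1)" using hH c by (simp add: homot_def)
      have Rc: "?R c \<in> Qh (k + 0)" using Rm_Qh[OF F c] .
      have "?h (?R c) \<in> Qh (k + 0 + (-1))" using hm_Qh[OF u(1) Rc] .
      hence "?h (?R c) \<in> Qh (k - 1)" by simp
      thus "H' c \<in> Qh (k - 1)" unfolding H'_def using Qh_add[OF Hc] by blast
    qed
    thus ?case by blast
  qed
qed

end

context setting
begin

definition good :: "'n csub set \<Rightarrow> bool" where
  "good \<sigma> \<longleftrightarrow> x0 \<in> \<sigma> \<and> \<not> (\<exists>y\<in>\<sigma> - {x0}. \<exists>z\<in>\<sigma> - {x0}. y \<noteq> z \<and> sim x0 y z)"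

lemma lab_eta: "(\<lambda>y. x0 \<inter> y) = lab" by (simp add: lab_def fun_eq_iff)

lemma sim_lab: "sim x0 y z \<longleftrightarrow> lab y = lab z" by (simp add: sim_def lab_def)

lemma phicoef_eq: "phicoef L \<sigma> \<tau> = (if good \<sigma> \<and> \<tau> = lab ` (\<sigma> - {x0}) then (-1) ^ (card \<sigma> - 1) else 0)"
  unfolding phicoef_def good_def lab_eta by simp

lemma good_inj: "good \<sigma> \<Longrightarrow> inj_on lab (\<sigma> - {x0})"
  unfolding good_def inj_on_def sim_lab by blast

lemma good_sub: "good \<sigma> \<Longrightarrow> x0 \<in> \<sigma>' \<Longrightarrow> \<sigma>' \<subseteq> \<sigma> \<Longrightarrow> good \<sigma>'"
  unfolding good_def by blast

lemma lab_x0: "lab x0 = x0" by (simp add: lab_def)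

lemma join_x0_lab: assumes "x0 \<in> \<rho>" shows "join x0 (lab ` (\<rho> - {x0})) = join UNIV \<rho>"
proof -
  have "lab ` \<rho> = insert x0 (lab ` (\<rho> - {x0}))" using assms lab_x0 by (metis image_insert insert_Diff)
  hence "\<Inter> (lab ` \<rho>) = x0 \<inter> \<Inter> (lab ` (\<rho> - {x0}))" by simp
  thus ?thesis using join_lab[OF assms] by (simp add: join_def)
qed

lemma card_good: assumes "good \<sigma>" "\<sigma> \<subseteq> U"
  shows "card (lab ` (\<sigma> - {x0})) = card \<sigma> - 1" "card \<sigma> \<ge> 1"
proof -
  have f: "finite \<sigma>" using finS assms(2) by blast
  have x: "x0 \<in> \<sigma>" using assms(1) good_def by blast
  show "card (lab ` (\<sigma> - {x0})) = card \<sigma> - 1"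
    using card_image[OF good_inj[OF assms(1)]] f x by simp
  show "card \<sigma> \<ge> 1" using f x card_gt_0_iff by (metis One_nat_def Suc_leI empty_iff)
qed

lemma sdeg_good: assumes "good \<sigma>" "\<sigma> \<subseteq> U"
  shows "sdeg x0 (lab ` (\<sigma> - {x0})) = sdeg UNIV \<sigma> - (2 * int (ccodim UNIV x0) - 1)"
proof -
  have x: "x0 \<in> \<sigma>" using assms(1) good_def by blast
  have j: "join x0 (lab ` (\<sigma> - {x0})) = join UNIV \<sigma>" by (rule join_x0_lab[OF x])
  have sub: "join UNIV \<sigma> \<subseteq> x0" using x by (auto simp: join_def)
  have d1: "vec.dim (join UNIV \<sigma>) \<le> vec.dim x0" using vec.dim_subset[OF sub] .
  have d2: "vec.dim x0 \<le> vec.dim (UNIV :: (complex ^ 'n) set)" using vec.dim_subset by blast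
  show ?thesis unfolding sdeg_def ccodim_def j card_good[OF assms]
    using d1 d2 card_good(2)[OF assms] by (simp add: of_nat_diff)
qed

lemma phicoef_nz: assumes "\<sigma> \<subseteq> U" "phicoef L \<sigma> \<tau> \<noteq> 0"
  shows "good \<sigma>" "\<tau> = lab ` (\<sigma> - {x0})" "\<tau> \<subseteq> T"
proof -
  show g: "good \<sigma>" and t: "\<tau> = lab ` (\<sigma> - {x0})" using assms(2) by (simp_all add: phicoef_eq split: if_splits)
  have "\<sigma> - {x0} \<subseteq> A'" using assms(1) U_eq by blast
  thus "\<tau> \<subseteq> T" unfolding t T_eq by blast
qed

lemma claim1: assumes "c \<in> cochains A'" shows "phi L c = (\<lambda>_. 0)"
proof (rule ext)
  fix \<tau>
  show "phi L c \<tau> = 0" unfolding phi_def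
  proof (rule sum.neutral, rule ballI)
    fix \<sigma> assume "\<sigma> \<in> Pow U"
    show "c \<sigma> * phicoef L \<sigma> \<tau> = 0"
    proof (cases "c \<sigma> = 0")
      case False
      hence "\<sigma> \<subseteq> A'" using assms by (auto simp: cochains_def)
      hence "x0 \<notin> \<sigma>" using x0_notin by blast
      hence "\<not> good \<sigma>" by (simp add: good_def)
      thus ?thesis by (simp add: phicoef_eq)
    qed simp
  qed
qed

lemma claim3: assumes "c \<in> hcochains UNIV U k"
  shows "phi L c \<in> hcochains x0 T (k - (2 * int (ccodim UNIV x0) - 1))"
  unfolding hcochains_def cochains_def
proof (intro CollectI conjI allI impI)
  fix \<tau> assume "phi L c \<tau> \<noteq> 0"
  then obtain \<sigma> where s: "\<sigma> \<subseteq> U" "c \<sigma> \<noteq> 0" "phicoef L \<sigma> \<tau> \<noteq> 0" unfolding phi_lin using lin_nz by blast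
  have g: "good \<sigma>" "\<tau> = lab ` (\<sigma> - {x0})" "\<tau> \<subseteq> T" using phicoef_nz[OF s(1,3)] by auto
  show "\<tau> \<subseteq> T" using g(3) .
  have "sdeg UNIV \<sigma> = k" using assms s(2) by (simp add: hcochains_def)
  thus "sdeg x0 \<tau> = k - (2 * int (ccodim UNIV x0) - 1)" using sdeg_good[OF g(1) s(1)] g(2) by simp
qed

end

lemma spos_adj: assumes "finite \<sigma>" "a \<in> \<sigma>" "lless L a b" "distinct L"
    and "\<And>w. w \<in> \<sigma> \<Longrightarrow> lless L a w \<Longrightarrow> lless L w b \<Longrightarrow> False"
  shows "spos L \<sigma> b = Suc (spos L \<sigma> a)"
proof -
  have eq: "{w \<in> \<sigma>. lless L w b} = insert a {w \<in> \<sigma>. lless L w a}"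
  proof (intro set_eqI iffI)
    fix w assume w: "w \<in> {w \<in> \<sigma>. lless L w b}"
    show "w \<in> insert a {w \<in> \<sigma>. lless L w a}"
    proof (cases "w = a")
      case False
      have "w \<in> set L" "a \<in> set L" using lless_set[of L w b] lless_set[of L a b] w assms(3) by auto
      moreover have "\<not> lless L a w" using assms(5) w by blast
      ultimately have "lless L w a" using lless_total[OF assms(4)] False by blast
      thus ?thesis using w by simp
    qed simp
  next
    fix w assume "w \<in> insert a {w \<in> \<sigma>. lless L w a}"
    thus "w \<in> {w \<in> \<sigma>. lless L w b}" using assms(2,3) lless_trans[OF assms(4)] by auto
  qed
  have "a \<notin> {w \<in> \<sigma>. lless L w a}" using lless_irrefl[OF assms(4)] by simp
  thus ?thesis unfolding spos_def eq using assms(1) by simp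
qed

context setting
begin

lemma spos_tA2: assumes g: "good \<sigma>" and s: "\<sigma> \<subseteq> U" and x: "x \<in> \<sigma>" "x \<noteq> x0"
  shows "spos (tA2 L) (lab ` (\<sigma> - {x0})) (lab x) = spos L \<sigma> x - 1"
proof -
  have f: "finite \<sigma>" using finS s by blast
  have xA: "x \<in> A'" using x s U_eq by blast
  have sA: "\<And>w. w \<in> \<sigma> - {x0} \<Longrightarrow> w \<in> A'" using s U_eq by blast
  have neq: "\<And>w. w \<in> \<sigma> - {x0} \<Longrightarrow> w \<noteq> x \<Longrightarrow> lab w \<noteq> lab x"
    using g x unfolding good_def sim_lab by blast
  have e1: "{v \<in> lab ` (\<sigma> - {x0}). lless (tA2 L) v (lab x)} = lab ` {w \<in> \<sigma> - {x0}. lless L w x}"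
  proof (intro set_eqI iffI)
    fix v assume "v \<in> {v \<in> lab ` (\<sigma> - {x0}). lless (tA2 L) v (lab x)}"
    then obtain w where w: "w \<in> \<sigma> - {x0}" "v = lab w" "lless (tA2 L) (lab w) (lab x)" by blast
    have "w \<noteq> x" using w(3) lless_irrefl[OF dist_tA2] by blast
    hence "lless L w x" using tA2_order_iff[OF sA[OF w(1)] xA neq[OF w(1)]] w(3) by simp
    thus "v \<in> lab ` {w \<in> \<sigma> - {x0}. lless L w x}" using w by blast
  next
    fix v assume "v \<in> lab ` {w \<in> \<sigma> - {x0}. lless L w x}"
    then obtain w where w: "w \<in> \<sigma> - {x0}" "v = lab w" "lless L w x" by blast
    have "w \<noteq> x" using w(3) lless_irrefl[OF dist] by blast
    hence "lless (tA2 L) (lab w) (lab x)" using tA2_order_iff[OF sA[OF w(1)] xA neq[OF w(1)]] w(3) by simp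
    thus "v \<in> {v \<in> lab ` (\<sigma> - {x0}). lless (tA2 L) v (lab x)}" using w by blast
  qed
  have c1: "card (lab ` {w \<in> \<sigma> - {x0}. lless L w x}) = card {w \<in> \<sigma> - {x0}. lless L w x}"
    by (rule card_image) (rule inj_on_subset[OF good_inj[OF g]], blast)
  have x0s: "x0 \<in> \<sigma>" using g by (simp add: good_def)
  have e2: "{w \<in> \<sigma>. lless L w x} = insert x0 {w \<in> \<sigma> - {x0}. lless L w x}"
  proof (intro set_eqI iffI)
    fix w assume "w \<in> {w \<in> \<sigma>. lless L w x}" thus "w \<in> insert x0 {w \<in> \<sigma> - {x0}. lless L w x}" by blast
  next
    fix w assume "w \<in> insert x0 {w \<in> \<sigma> - {x0}. lless L w x}"
    thus "w \<in> {w \<in> \<sigma>. lless L w x}" using x0s x0_less[OF xA] by blast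
  qed
  have c2: "card {w \<in> \<sigma>. lless L w x} = Suc (card {w \<in> \<sigma> - {x0}. lless L w x})"
    unfolding e2 using f by simp
  show ?thesis unfolding spos_def e1 c1 c2 by simp
qed

lemma good_swap: assumes "y \<noteq> z" "lab y = lab z" "y \<in> \<sigma> - {x0}" "z \<in> \<sigma> - {x0}" "good (\<sigma> - {y})"
  shows "good (\<sigma> - {z})"
  unfolding good_def sim_lab
proof (intro conjI notI)
  show "x0 \<in> \<sigma> - {z}" using assms(4,5) unfolding good_def by blast
next
  assume "\<exists>a\<in>\<sigma> - {z} - {x0}. \<exists>b\<in>\<sigma> - {z} - {x0}. a \<noteq> b \<and> lab a = lab b"
  then obtain a b where ab: "a \<in> \<sigma> - {z} - {x0}" "b \<in> \<sigma> - {z} - {x0}" "a \<noteq> b" "lab a = lab b" by blast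
  have ng: "\<not> (\<exists>a\<in>\<sigma> - {y} - {x0}. \<exists>b\<in>\<sigma> - {y} - {x0}. a \<noteq> b \<and> lab a = lab b)"
    using assms(5) unfolding good_def sim_lab by blast
  show False
  proof (cases "a = y")
    case True
    hence "z \<in> \<sigma> - {y} - {x0}" "b \<in> \<sigma> - {y} - {x0}" "z \<noteq> b" "lab z = lab b"
      using ab assms by auto
    thus False using ng by blast
  next
    case a: False
    show False
    proof (cases "b = y")
      case True
      hence "a \<in> \<sigma> - {y} - {x0}" "z \<in> \<sigma> - {y} - {x0}" "a \<noteq> z" "lab a = lab z"
        using ab assms by auto
      thus False using ng by blast
    next
      case False
      hence "a \<in> \<sigma> - {y} - {x0}" "b \<in> \<sigma> - {y} - {x0}" using ab a by auto
      thus False using ng ab by blast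
    qed
  qed
qed

lemma claim2_mat: assumes s: "\<sigma> \<subseteq> U"
  shows "(\<Sum>\<rho>\<in>Pow U. dcoef L UNIV \<sigma> \<rho> * phicoef L \<rho> \<tau>) = (\<Sum>\<rho>\<in>Pow T. phicoef L \<sigma> \<rho> * dcoef (tA2 L) x0 \<rho> \<tau>)"
proof -
  have f: "finite \<sigma>" using finS s by blast
  define F where "F = (\<lambda>x. if J \<sigma> x then (-1::rat) ^ spos L \<sigma> x * phicoef L (\<sigma> - {x}) \<tau> else 0)"
  have LHS: "(\<Sum>\<rho>\<in>Pow U. dcoef L UNIV \<sigma> \<rho> * phicoef L \<rho> \<tau>) = sum F \<sigma>"
    unfolding F_def by (rule dsum[OF s])
  define \<rho>0 where "\<rho>0 = lab ` (\<sigma> - {x0})"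
  have r0: "\<rho>0 \<in> Pow T" using s U_eq unfolding \<rho>0_def T_eq by blast
  have RHS: "(\<Sum>\<rho>\<in>Pow T. phicoef L \<sigma> \<rho> * dcoef (tA2 L) x0 \<rho> \<tau>) = phicoef L \<sigma> \<rho>0 * dcoef (tA2 L) x0 \<rho>0 \<tau>"
    by (rule sum_single[OF _ r0]) (simp_all add: phicoef_eq \<rho>0_def)
  show ?thesis
  proof (cases "x0 \<in> \<sigma>")
    case False
    have "sum F \<sigma> = 0" unfolding F_def using False by (intro sum.neutral) (simp add: phicoef_eq good_def)
    moreover have "phicoef L \<sigma> \<rho>0 = 0" using False by (simp add: phicoef_eq good_def)
    ultimately show ?thesis using LHS RHS by simp
  next
    case x0: True
    show ?thesis
    proof (cases "good \<sigma>")
      case g: True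
      have F0: "F x0 = 0" unfolding F_def by (simp add: phicoef_eq good_def)
      have L1: "sum F \<sigma> = sum F (\<sigma> - {x0})" using sum.remove[OF f x0, of F] F0 by simp
      define G where "G = (\<lambda>v. if \<tau> = \<rho>0 - {v} \<and> join x0 (\<rho>0 - {v}) = join x0 \<rho>0
                      then (-1::rat) ^ spos (tA2 L) \<rho>0 v else 0)"
      have dc: "dcoef (tA2 L) x0 \<rho>0 \<tau> = sum G \<rho>0" by (simp add: dcoef_def G_def)
      have re: "sum G \<rho>0 = sum (G \<circ> lab) (\<sigma> - {x0})" unfolding \<rho>0_def by (rule sum.reindex[OF good_inj[OF g]])
      have cs: "card \<sigma> \<ge> 2" if "x \<in> \<sigma>" "x \<noteq> x0" for x
      proof -
        have "{x0, x} \<subseteq> \<sigma>" using x0 that by blast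
        hence "card {x0, x} \<le> card \<sigma>" using f card_mono by blast
        thus ?thesis using that by simp
      qed
      have tm: "F x = (-1) ^ (card \<sigma> - 1) * (G \<circ> lab) x" if x: "x \<in> \<sigma> - {x0}" for x
      proof -
        have xs: "x \<in> \<sigma>" "x \<noteq> x0" using x by auto
        have xA: "x \<in> A'" using xs s U_eq by blast
        have gx: "good (\<sigma> - {x})" by (rule good_sub[OF g]) (use xs x0 in auto)
        have im: "\<rho>0 - {lab x} = lab ` ((\<sigma> - {x}) - {x0})"
        proof (intro set_eqI iffI)
          fix v assume "v \<in> \<rho>0 - {lab x}"
          then obtain w where w: "w \<in> \<sigma> - {x0}" "v = lab w" "lab w \<noteq> lab x" unfolding \<rho>0_def by blast
          hence "w \<noteq> x" by blast
          thus "v \<in> lab ` ((\<sigma> - {x}) - {x0})" using w by blast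
        next
          fix v assume "v \<in> lab ` ((\<sigma> - {x}) - {x0})"
          then obtain w where w: "w \<in> \<sigma> - {x0}" "w \<noteq> x" "v = lab w" by blast
          have "lab w \<noteq> lab x" using g w x unfolding good_def sim_lab by blast
          thus "v \<in> \<rho>0 - {lab x}" using w unfolding \<rho>0_def by blast
        qed
        have j1: "join x0 (\<rho>0 - {lab x}) = join UNIV (\<sigma> - {x})"
          unfolding im by (rule join_x0_lab) (use xs x0 in blast)
        have j2: "join x0 \<rho>0 = join UNIV \<sigma>" unfolding \<rho>0_def by (rule join_x0_lab[OF x0])
        have ph: "phicoef L (\<sigma> - {x}) \<tau> = (if \<tau> = lab ` ((\<sigma> - {x}) - {x0}) then (-1) ^ (card \<sigma> - 2) else 0)"
        proof -
          have "card (\<sigma> - {x}) - 1 = card \<sigma> - 2" using f xs by simp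
          thus ?thesis using gx by (simp add: phicoef_eq)
        qed
        have sp: "spos (tA2 L) \<rho>0 (lab x) = spos L \<sigma> x - 1" unfolding \<rho>0_def by (rule spos_tA2[OF g s xs])
        have sp2: "spos L \<sigma> x \<ge> 2" using spos_remove(2)[OF f x0 x0_less[OF xA]] .
        have ex: "spos L \<sigma> x + (card \<sigma> - 2) = (card \<sigma> - 1) + (spos L \<sigma> x - 1)" using sp2 cs[OF xs] by simp
        have pw: "(-1::rat) ^ spos L \<sigma> x * (-1) ^ (card \<sigma> - 2) = (-1) ^ (card \<sigma> - 1) * (-1) ^ (spos L \<sigma> x - 1)"
          unfolding power_add[symmetric] ex ..
        show ?thesis
        proof (cases "\<tau> = lab ` ((\<sigma> - {x}) - {x0}) \<and> J \<sigma> x")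
          case True
          thus ?thesis unfolding F_def G_def comp_def ph sp j1 j2 im[symmetric] using pw by simp
        next
          case False
          thus ?thesis unfolding F_def G_def comp_def ph sp j1 j2 im[symmetric] by auto
        qed
      qed
      have "sum F \<sigma> = (-1) ^ (card \<sigma> - 1) * sum G \<rho>0"
        unfolding L1 re sum_distrib_left using tm by (intro sum.cong) auto
      moreover have "phicoef L \<sigma> \<rho>0 = (-1) ^ (card \<sigma> - 1)" using g by (simp add: phicoef_eq \<rho>0_def)
      ultimately show ?thesis using LHS RHS dc by simp
    next
      case ng: False
      have R0: "phicoef L \<sigma> \<rho>0 = 0" using ng by (simp add: phicoef_eq)
      obtain y0 z0 where yz0: "y0 \<in> \<sigma> - {x0}" "z0 \<in> \<sigma> - {x0}" "y0 \<noteq> z0" "lab y0 = lab z0"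
        using ng x0 unfolding good_def sim_lab by blast
      obtain y z where yz: "y \<in> \<sigma> - {x0}" "z \<in> \<sigma> - {x0}" "y \<noteq> z" "lab y = lab z" "lless L y z"
      proof (cases "lless L y0 z0")
        case True thus ?thesis using that yz0 by blast
      next
        case False
        have "y0 \<in> U" "z0 \<in> U" using yz0 s by auto
        hence "lless L z0 y0" using False lless_total[OF dist] yz0(3) by blast
        thus ?thesis using that[of z0 y0] yz0 by auto
      qed
      have Fo: "F x = 0" if "x \<in> \<sigma>" "x \<noteq> y" "x \<noteq> z" for x
      proof -
        have "\<not> good (\<sigma> - {x})" using yz that unfolding good_def sim_lab by blast
        thus ?thesis unfolding F_def by (simp add: phicoef_eq)
      qed
      have sF: "sum F \<sigma> = F y + F z"
      proof -
        have "sum F \<sigma> = sum F {y, z}"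
          by (rule sum.mono_neutral_right[OF f]) (use yz Fo in auto)
        thus ?thesis using yz(3) by simp
      qed
      have "F y + F z = 0"
      proof (cases "good (\<sigma> - {y})")
        case False
        hence "\<not> good (\<sigma> - {z})" using good_swap[of z y \<sigma>] yz by metis
        thus ?thesis using False unfolding F_def by (simp add: phicoef_eq)
      next
        case True
        have gz: "good (\<sigma> - {z})" using good_swap[OF yz(3,4,1,2) True] .
        have Jy: "J \<sigma> y"
        proof -
          have "join UNIV (insert y (\<sigma> - {y})) = join UNIV (\<sigma> - {y})"
            by (rule join_insert_class[of _ z]) (use yz x0 in auto)
          moreover have "insert y (\<sigma> - {y}) = \<sigma>" using yz by blast
          ultimately show ?thesis by simp
        qed
        have Jz: "J \<sigma> z"
        proof -
          have "join UNIV (insert z (\<sigma> - {z})) = join UNIV (\<sigma> - {z})"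
            by (rule join_insert_class[of _ y]) (use yz x0 in auto)
          moreover have "insert z (\<sigma> - {z}) = \<sigma>" using yz by blast
          ultimately show ?thesis by simp
        qed
        have imeq: "lab ` (\<sigma> - {y} - {x0}) = lab ` (\<sigma> - {z} - {x0})"
        proof (intro equalityI image_subsetI)
          fix w assume w: "w \<in> \<sigma> - {y} - {x0}"
          show "lab w \<in> lab ` (\<sigma> - {z} - {x0})"
          proof (cases "w = z")
            case True thus ?thesis using yz by (metis DiffD1 DiffD2 DiffI image_eqI singletonD)
          qed (use w in blast)
        next
          fix w assume w: "w \<in> \<sigma> - {z} - {x0}"
          show "lab w \<in> lab ` (\<sigma> - {y} - {x0})"
          proof (cases "w = y")
            case True thus ?thesis using yz by (metis DiffD1 DiffD2 DiffI image_eqI singletonD)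
          qed (use w in blast)
        qed
        have ceq: "card (\<sigma> - {y}) = card (\<sigma> - {z})" using f yz by simp
        have P: "phicoef L (\<sigma> - {y}) \<tau> = phicoef L (\<sigma> - {z}) \<tau>"
          unfolding phicoef_eq using True gz imeq ceq by simp
        have adj: "spos L \<sigma> z = Suc (spos L \<sigma> y)"
        proof (rule spos_adj[OF f _ yz(5) dist])
          show "y \<in> \<sigma>" using yz by blast
        next
          fix w assume w: "w \<in> \<sigma>" "lless L y w" "lless L w z"
          have yA: "y \<in> A'" using yz s U_eq by blast
          have "lab y = lab w" using contig'[OF yA w(2,3)] yz(4) by simp
          moreover have "w \<noteq> x0" using w(2) not_less_x0 by blast
          moreover have "w \<noteq> z" using w(3) lless_irrefl[OF dist] by blast
          moreover have "w \<noteq> y" using w(2) lless_irrefl[OF dist] by blast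
          ultimately have "\<not> good (\<sigma> - {z})" using w(1) yz unfolding good_def sim_lab by blast
          thus False using gz by simp
        qed
        show ?thesis unfolding F_def using Jy Jz P adj by simp
      qed
      thus ?thesis using LHS RHS R0 sF by simp
    qed
  qed
qed

lemma claim2: "phi L (dif L UNIV c) = dif (tA2 L) x0 (phi L c)"
proof -
  have "phi L (dif L UNIV c) = lin U (\<lambda>\<sigma> \<tau>. \<Sum>\<rho>\<in>Pow U. dcoef L UNIV \<sigma> \<rho> * phicoef L \<rho> \<tau>) c"
    unfolding phi_lin dif_lin by (rule lin_comp)
  also have "\<dots> = lin U (\<lambda>\<sigma> \<tau>. \<Sum>\<rho>\<in>Pow T. phicoef L \<sigma> \<rho> * dcoef (tA2 L) x0 \<rho> \<tau>) c"
    by (rule ext, rule lin_cong) (rule claim2_mat)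
  also have "\<dots> = dif (tA2 L) x0 (phi L c)"
    unfolding phi_lin dif_lin by (rule lin_comp[symmetric])
  finally show ?thesis .
qed

end

lemma dif_nz: assumes "dif L' W c \<tau> \<noteq> 0"
  shows "\<exists>\<sigma>. \<sigma> \<subseteq> set L' \<and> c \<sigma> \<noteq> 0 \<and> (\<exists>x\<in>\<sigma>. \<tau> = \<sigma> - {x} \<and> join W (\<sigma> - {x}) = join W \<sigma>)"
proof -
  obtain \<sigma> where s: "\<sigma> \<subseteq> set L'" "c \<sigma> \<noteq> 0" "dcoef L' W \<sigma> \<tau> \<noteq> 0"
    using assms unfolding dif_lin using lin_nz by blast
  thus ?thesis using dcoef_nz[OF s(3)] by blast
qed

lemma dif_hom: assumes "c \<in> hcochains W (set L') k"
  shows "dif L' W c \<in> hcochains W (set L') (k + 1)"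
  unfolding hcochains_def cochains_def
proof (intro CollectI conjI allI impI)
  fix \<tau> assume "dif L' W c \<tau> \<noteq> 0"
  then obtain \<sigma> x where s: "\<sigma> \<subseteq> set L'" "c \<sigma> \<noteq> 0" "x \<in> \<sigma>" "\<tau> = \<sigma> - {x}" "join W (\<sigma> - {x}) = join W \<sigma>"
    using dif_nz by blast
  have f: "finite \<sigma>" using s(1) finite_subset by blast
  show "\<tau> \<subseteq> set L'" using s by blast
  have "sdeg W \<sigma> = k" using assms s(2) by (simp add: hcochains_def)
  thus "sdeg W \<tau> = k + 1" using sdeg_remove[OF f s(3) s(5)] s(4) by simp
qed

lemma dif_zero: "dif L' W (\<lambda>_. 0) = (\<lambda>_. 0)"
  unfolding dif_lin by (rule lin_zero)

context setting
begin

definition psim :: "'n csub set \<Rightarrow> 'n csub set \<Rightarrow> rat" where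
  "psim \<tau> \<sigma> = (if \<tau> \<subseteq> T \<and> \<sigma> = insert x0 (fr ` \<tau>) then (-1) ^ card \<tau> else 0)"

lemma fr_inj: "inj_on fr T"
  by (rule inj_on_inverseI[of _ lab]) (rule lab_fr)

lemma psi_basis: assumes t: "\<tau> \<subseteq> T"
  shows "good (insert x0 (fr ` \<tau>))" "lab ` (insert x0 (fr ` \<tau>) - {x0}) = \<tau>"
    "insert x0 (fr ` \<tau>) \<subseteq> U" "card (insert x0 (fr ` \<tau>)) = card \<tau> + 1"
proof -
  have fA: "fr ` \<tau> \<subseteq> A'" using t fr_A' by blast
  have nx: "x0 \<notin> fr ` \<tau>" using fA x0_notin by blast
  have e: "insert x0 (fr ` \<tau>) - {x0} = fr ` \<tau>" using nx by simp
  have ft: "finite \<tau>" using t finite_subset by blast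
  show "lab ` (insert x0 (fr ` \<tau>) - {x0}) = \<tau>" unfolding e image_image
    using lab_fr t by (intro image_idI) auto
  show "good (insert x0 (fr ` \<tau>))" unfolding good_def sim_lab e
  proof (intro conjI notI)
    show "x0 \<in> insert x0 (fr ` \<tau>)" by simp
  next
    assume "\<exists>y\<in>fr ` \<tau>. \<exists>z\<in>fr ` \<tau>. y \<noteq> z \<and> lab y = lab z"
    then obtain a b where "a \<in> \<tau>" "b \<in> \<tau>" "fr a \<noteq> fr b" "lab (fr a) = lab (fr b)" by blast
    thus False using lab_fr t by (metis subsetD)
  qed
  show "insert x0 (fr ` \<tau>) \<subseteq> U" using fA U_eq by blast
  have "card (fr ` \<tau>) = card \<tau>" using card_image[OF inj_on_subset[OF fr_inj t]] .
  thus "card (insert x0 (fr ` \<tau>)) = card \<tau> + 1" using nx ft by simp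
qed

lemma psim_nz: assumes "\<tau> \<subseteq> T" "psim \<tau> \<sigma> \<noteq> 0"
  shows "\<sigma> \<subseteq> U \<and> x0 \<in> \<sigma> \<and> sdeg UNIV \<sigma> = sdeg x0 \<tau> + (2 * int (ccodim UNIV x0) - 1)"
proof -
  have e: "\<sigma> = insert x0 (fr ` \<tau>)" using assms(2) by (simp add: psim_def split: if_splits)
  have "sdeg x0 (lab ` (\<sigma> - {x0})) = sdeg UNIV \<sigma> - (2 * int (ccodim UNIV x0) - 1)"
    unfolding e by (rule sdeg_good[OF psi_basis(1,3)[OF assms(1)]])
  thus ?thesis using psi_basis[OF assms(1)] e by simp
qed

lemma phipsi: assumes z: "z \<in> cochains T" shows "phi L (lin T psim z) = z"
proof -
  have "phi L (lin T psim z) = lin T (\<lambda>\<tau>' \<tau>. \<Sum>\<rho>\<in>Pow U. psim \<tau>' \<rho> * phicoef L \<rho> \<tau>) z"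
    unfolding phi_lin by (rule lin_comp)
  also have "\<dots> = lin T (\<lambda>\<tau>' \<tau>. if \<tau> = \<tau>' then 1 else 0) z"
  proof (rule ext, rule lin_cong)
    fix \<tau>' \<tau> assume t: "\<tau>' \<subseteq> T"
    define \<rho>0 where "\<rho>0 = insert x0 (fr ` \<tau>')"
    have r0: "\<rho>0 \<in> Pow U" using psi_basis(3)[OF t] \<rho>0_def by simp
    have "(\<Sum>\<rho>\<in>Pow U. psim \<tau>' \<rho> * phicoef L \<rho> \<tau>) = psim \<tau>' \<rho>0 * phicoef L \<rho>0 \<tau>"
      by (rule sum_single[OF _ r0]) (simp_all add: psim_def \<rho>0_def)
    also have "\<dots> = (-1) ^ card \<tau>' * (if \<tau> = \<tau>' then (-1) ^ card \<tau>' else 0)"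
      unfolding \<rho>0_def using psi_basis[OF t] t by (simp add: psim_def phicoef_eq)
    also have "\<dots> = (if \<tau> = \<tau>' then 1 else 0)" by (simp add: power_add[symmetric])
    finally show "(\<Sum>\<rho>\<in>Pow U. psim \<tau>' \<rho> * phicoef L \<rho> \<tau>) = (if \<tau> = \<tau>' then 1 else 0)" .
  qed
  also have "\<dots> = z"
    by (rule ext, rule lin_id) (use z in \<open>auto simp: cochains_def\<close>)
  finally show ?thesis .
qed

lemma good_sing: assumes s: "\<sigma> \<subseteq> U" "x0 \<in> \<sigma>" shows "good \<sigma> \<longleftrightarrow> (\<forall>u\<in>T. sing \<sigma> u)"
proof
  assume g: "good \<sigma>"
  show "\<forall>u\<in>T. sing \<sigma> u" unfolding sing_def
  proof (intro ballI impI)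
    fix u y z assume "y \<in> \<sigma>" "z \<in> \<sigma>" "y \<in> C u" "z \<in> C u"
    moreover hence "y \<noteq> x0" "z \<noteq> x0" "lab y = lab z" using x0_notC C_lab_eq by metis+
    ultimately show "y = z" using g unfolding good_def sim_lab by blast
  qed
next
  assume a: "\<forall>u\<in>T. sing \<sigma> u"
  show "good \<sigma>" unfolding good_def sim_lab
  proof (intro conjI notI)
    show "x0 \<in> \<sigma>" using s by simp
  next
    assume "\<exists>y\<in>\<sigma> - {x0}. \<exists>z\<in>\<sigma> - {x0}. y \<noteq> z \<and> lab y = lab z"
    then obtain y z where yz: "y \<in> \<sigma> - {x0}" "z \<in> \<sigma> - {x0}" "y \<noteq> z" "lab y = lab z" by blast
    have yA: "y \<in> A'" "z \<in> A'" using yz s U_eq by blast+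
    have "y \<in> C (lab y)" "z \<in> C (lab y)" using yA yz(4) by (simp_all add: C_def)
    moreover have "lab y \<in> T" using lab_T yA by blast
    ultimately show False using a yz unfolding sing_def by blast
  qed
qed

lemma gT_image: assumes s: "\<sigma> \<subseteq> U" "x0 \<in> \<sigma>" shows "g T ` \<sigma> = insert x0 (fr ` lab ` (\<sigma> - {x0}))"
proof -
  have "g T ` \<sigma> = insert (g T x0) (g T ` (\<sigma> - {x0}))" using s by (metis image_insert insert_Diff)
  moreover have "g T ` (\<sigma> - {x0}) = fr ` lab ` (\<sigma> - {x0})"
    unfolding image_image
  proof (rule image_cong[OF refl])
    fix y assume "y \<in> \<sigma> - {x0}"
    hence "y \<in> A'" using s U_eq by blast
    thus "g T y = fr (lab y)" using lab_T by (simp add: g_def)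
  qed
  ultimately show ?thesis using g_x0 by simp
qed

lemma psiphi: assumes c: "c \<in> Qco" shows "lin T psim (phi L c) = lin U (Rm T) c"
proof -
  have "lin T psim (phi L c) = lin U (\<lambda>\<sigma> \<tau>. \<Sum>\<rho>\<in>Pow T. phicoef L \<sigma> \<rho> * psim \<rho> \<tau>) c"
    unfolding phi_lin by (rule lin_comp)
  also have "\<dots> = lin U (Rm T) c"
  proof (rule ext, rule lin_cong)
    fix \<sigma> \<tau> assume s: "\<sigma> \<subseteq> U" "c \<sigma> \<noteq> 0"
    have x0: "x0 \<in> \<sigma>" using c s by (auto simp: Qco_def)
    define \<rho>0 where "\<rho>0 = lab ` (\<sigma> - {x0})"
    have r0: "\<rho>0 \<in> Pow T" using s U_eq unfolding \<rho>0_def T_eq by blast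
    have S: "(\<Sum>\<rho>\<in>Pow T. phicoef L \<sigma> \<rho> * psim \<rho> \<tau>) = phicoef L \<sigma> \<rho>0 * psim \<rho>0 \<tau>"
      by (rule sum_single[OF _ r0]) (simp_all add: phicoef_eq \<rho>0_def)
    show "(\<Sum>\<rho>\<in>Pow T. phicoef L \<sigma> \<rho> * psim \<rho> \<tau>) = Rm T \<sigma> \<tau>"
    proof (cases "good \<sigma>")
      case True
      have gs: "\<forall>u\<in>T. sing \<sigma> u" using good_sing[OF s(1) x0] True by simp
      have cr: "card \<rho>0 = card \<sigma> - 1" unfolding \<rho>0_def by (rule card_good(1)[OF True s(1)])
      have "phicoef L \<sigma> \<rho>0 * psim \<rho>0 \<tau> = (if \<tau> = insert x0 (fr ` \<rho>0) then 1 else 0)"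
        using True r0 cr by (simp add: phicoef_eq psim_def \<rho>0_def power_add[symmetric])
      moreover have "Rm T \<sigma> \<tau> = (if \<tau> = insert x0 (fr ` \<rho>0) then 1 else 0)"
        using gs x0 gT_image[OF s(1) x0] by (simp add: Rm_def \<rho>0_def)
      ultimately show ?thesis using S by simp
    next
      case False
      have "\<not> (\<forall>u\<in>T. sing \<sigma> u)" using good_sing[OF s(1) x0] False by simp
      hence "Rm T \<sigma> \<tau> = 0" by (simp add: Rm_def)
      moreover have "phicoef L \<sigma> \<rho>0 = 0" using False by (simp add: phicoef_eq)
      ultimately show ?thesis using S by simp
    qed
  qed
  finally show ?thesis .
qed

definition trunc :: "('n csub set \<Rightarrow> rat) \<Rightarrow> ('n csub set \<Rightarrow> rat)" where
  "trunc c = (\<lambda>\<sigma>. if x0 \<in> \<sigma> then c \<sigma> else 0)"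

lemma phi_trunc: "phi L (trunc c) = phi L c"
  unfolding phi_def trunc_def by (intro ext sum.cong) (auto simp: phicoef_eq good_def)

lemma dq_dif: "lin U dq c \<tau> = (if x0 \<in> \<tau> then dif L UNIV c \<tau> else 0)"
proof (cases "x0 \<in> \<tau>")
  case True
  have "lin U dq c \<tau> = dif L UNIV c \<tau>" unfolding dif_lin lin_def
  proof (rule sum.cong[OF refl])
    fix \<sigma> assume "\<sigma> \<in> Pow U"
    show "c \<sigma> * dq \<sigma> \<tau> = c \<sigma> * dcoef L UNIV \<sigma> \<tau>"
    proof (cases "x0 \<in> \<sigma>")
      case False
      have "dcoef L UNIV \<sigma> \<tau> = 0"
      proof (rule ccontr)
        assume "dcoef L UNIV \<sigma> \<tau> \<noteq> 0"
        then obtain x where "\<tau> = \<sigma> - {x}" using dcoef_nz by blast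
        thus False using True False by simp
      qed
      thus ?thesis using False by (simp add: dq_def)
    qed (simp add: dq_def True)
  qed
  thus ?thesis using True by simp
next
  case False thus ?thesis by (simp add: lin_def dq_def)
qed

lemma phi_dq: "phi L (lin U dq c) = phi L (dif L UNIV c)"
proof -
  have "lin U dq c = trunc (dif L UNIV c)" unfolding trunc_def by (rule ext) (simp add: dq_dif)
  thus ?thesis using phi_trunc by simp
qed

lemma dq_trunc: "lin U dq (trunc c) = lin U dq c"
  unfolding lin_def trunc_def by (intro ext sum.cong) (auto simp: dq_def)

lemma psi_Qco: "z \<in> cochains T \<Longrightarrow> lin T psim z \<in> Qco"
  using psim_nz by (intro Qco_I) (metis PowD lin_nz)

lemma psi_hom: assumes "z \<in> hcochains x0 T j" shows "lin T psim z \<in> Qh (j + (2 * int (ccodim UNIV x0) - 1))"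
proof (rule Qh_I)
  fix \<sigma> assume "lin T psim z \<sigma> \<noteq> 0"
  then obtain \<tau> where t: "\<tau> \<subseteq> T" "z \<tau> \<noteq> 0" "psim \<tau> \<sigma> \<noteq> 0" using lin_nz by blast
  have "sdeg x0 \<tau> = j" using assms t(2) by (simp add: hcochains_def)
  thus "\<sigma> \<subseteq> U \<and> x0 \<in> \<sigma> \<and> sdeg UNIV \<sigma> = j + (2 * int (ccodim UNIV x0) - 1)" using psim_nz[OF t(1,3)] by simp
qed

lemma psi_chain: assumes z: "z \<in> cochains T"
  shows "lin T psim (dif (tA2 L) x0 z) = lin U dq (lin T psim z)"
proof -
  obtain H where hH: "homot T H" using homotopy_exists by blast
  have pz: "lin T psim z \<in> Qco" using psi_Qco[OF z] .
  have "lin T psim (dif (tA2 L) x0 z) = lin T psim (dif (tA2 L) x0 (phi L (lin T psim z)))"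
    using phipsi[OF z] by simp
  also have "\<dots> = lin T psim (phi L (dif L UNIV (lin T psim z)))" by (simp add: claim2)
  also have "\<dots> = lin T psim (phi L (lin U dq (lin T psim z)))" by (simp add: phi_dq)
  also have "\<dots> = lin U (Rm T) (lin U dq (lin T psim z))" by (rule psiphi[OF dq_Qco[OF pz]])
  also have "\<dots> = lin U dq (lin U (Rm T) (lin T psim z))" using chain_from_homot[OF hH pz] by simp
  also have "\<dots> = lin U dq (lin T psim (phi L (lin T psim z)))" using psiphi[OF pz] by simp
  also have "\<dots> = lin U dq (lin T psim z)" using phipsi[OF z] by simp
  finally show ?thesis .
qed

end

lemma dif_supp: assumes "dif L' W c \<tau> \<noteq> 0" shows "\<tau> \<subseteq> set L'"
proof -
  obtain \<sigma> x where s: "\<sigma> \<subseteq> set L'" "x \<in> \<sigma>" "\<tau> = \<sigma> - {x}" using dif_nz[OF assms] by blast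
  have "\<tau> \<subseteq> \<sigma>" unfolding s(3) by blast
  thus ?thesis using s(1) by blast
qed

context setting
begin

abbreviation "sv \<equiv> 2 * int (ccodim UNIV x0) - 1"

lemma subA': assumes "\<tau> \<subseteq> U" "x0 \<notin> \<tau>" shows "\<tau> \<subseteq> A'"
proof
  fix y assume "y \<in> \<tau>"
  hence "y \<in> insert x0 A'" "y \<noteq> x0" using assms U_eq by auto
  thus "y \<in> A'" by simp
qed

lemma Qh_hco: "c \<in> Qh j \<Longrightarrow> c \<in> hcochains UNIV U j"
  by (auto simp: Qh_def Qco_def hcochains_def cochains_def)

lemma claim4: assumes c: "c \<in> hcochains UNIV U k" and dc: "dif L UNIV c \<in> cochains A'"
    and b: "b \<in> hcochains x0 T (k - sv - 1)" and pb: "phi L c = dif (tA2 L) x0 b"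
  shows "\<exists>a\<in>hcochains UNIV U (k - 1). \<exists>e\<in>hcochains UNIV A' k. c = (\<lambda>\<sigma>. dif L UNIV a \<sigma> + e \<sigma>)"
proof -
  let ?d = "lin U dq" and ?R = "lin U (Rm T)" and ?p = "lin T psim"
  define cq where "cq = trunc c"
  have cqh: "cq \<in> Qh k"
  proof (rule Qh_I)
    fix \<tau> assume "cq \<tau> \<noteq> 0"
    hence "x0 \<in> \<tau>" "c \<tau> \<noteq> 0" by (simp_all add: cq_def trunc_def split: if_splits)
    thus "\<tau> \<subseteq> U \<and> x0 \<in> \<tau> \<and> sdeg UNIV \<tau> = k" using c unfolding hcochains_def cochains_def by blast
  qed
  have cqc: "cq \<in> Qco" using Qh_Qco[OF cqh] .
  have dcq: "?d cq = (\<lambda>_. 0)"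
  proof (rule ext)
    fix \<tau>
    have "?d cq \<tau> = (if x0 \<in> \<tau> then dif L UNIV c \<tau> else 0)" unfolding cq_def dq_trunc by (rule dq_dif)
    moreover have "x0 \<in> \<tau> \<Longrightarrow> dif L UNIV c \<tau> = 0" using dc x0_notin by (auto simp: cochains_def)
    ultimately show "?d cq \<tau> = 0" by simp
  qed
  obtain H where hH: "homot T H" using homotopy_exists by blast
  have e1: "(\<lambda>\<tau>. ?d (H cq) \<tau> + H (?d cq) \<tau>) = (\<lambda>\<tau>. cq \<tau> - ?R cq \<tau>)" using hH cqc by (simp add: homot_def)
  have H0: "H (?d cq) = (\<lambda>_. 0)" using hH dcq by (simp add: homot_def)
  have bc: "b \<in> cochains T" using b by (simp add: hcochains_def)
  have Rcq: "?R cq = ?d (?p b)"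
  proof -
    have "?R cq = ?p (phi L cq)" using psiphi[OF cqc] by simp
    also have "\<dots> = ?p (phi L c)" unfolding cq_def phi_trunc ..
    also have "\<dots> = ?p (dif (tA2 L) x0 b)" using pb by simp
    also have "\<dots> = ?d (?p b)" by (rule psi_chain[OF bc])
    finally show ?thesis .
  qed
  define a where "a = (\<lambda>\<tau>. H cq \<tau> + ?p b \<tau>)"
  have da: "?d a = cq"
  proof (rule ext)
    fix \<tau>
    have "?d a \<tau> = ?d (H cq) \<tau> + ?d (?p b) \<tau>" unfolding a_def by (simp add: lin_add)
    moreover have "?d (H cq) \<tau> + 0 = cq \<tau> - ?R cq \<tau>" using fun_cong[OF e1, of \<tau>] H0 by simp
    ultimately show "?d a \<tau> = cq \<tau>" using Rcq by simp
  qed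
  have aQ: "a \<in> Qh (k - 1)"
  proof -
    have "H cq \<in> Qh (k - 1)" using hH cqh by (simp add: homot_def)
    moreover have "?p b \<in> Qh (k - sv - 1 + sv)" by (rule psi_hom[OF b])
    moreover have "k - sv - 1 + sv = k - 1" by simp
    ultimately show ?thesis unfolding a_def using Qh_add by metis
  qed
  have ah: "a \<in> hcochains UNIV U (k - 1)" using Qh_hco[OF aQ] .
  have dah: "dif L UNIV a \<in> hcochains UNIV U k" using dif_hom[OF ah] by simp
  define e where "e = (\<lambda>\<sigma>. c \<sigma> - dif L UNIV a \<sigma>)"
  have eh: "e \<in> hcochains UNIV A' k"
    unfolding hcochains_def cochains_def
  proof (intro CollectI conjI allI impI)
    fix \<sigma> assume ne: "e \<sigma> \<noteq> 0"
    hence "c \<sigma> \<noteq> 0 \<or> dif L UNIV a \<sigma> \<noteq> 0" by (auto simp: e_def)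
    hence su: "\<sigma> \<subseteq> U \<and> sdeg UNIV \<sigma> = k"
    proof
      assume "c \<sigma> \<noteq> 0" thus ?thesis using c unfolding hcochains_def cochains_def by blast
    next
      assume "dif L UNIV a \<sigma> \<noteq> 0" thus ?thesis using dah unfolding hcochains_def cochains_def by blast
    qed
    have "x0 \<notin> \<sigma>"
    proof
      assume x: "x0 \<in> \<sigma>"
      have "dif L UNIV a \<sigma> = ?d a \<sigma>" using dq_dif[of a \<sigma>] x by simp
      also have "\<dots> = c \<sigma>" using da x by (simp add: cq_def trunc_def)
      finally show False using ne by (simp add: e_def)
    qed
    thus "\<sigma> \<subseteq> A'" using su subA' by blast
    show "sdeg UNIV \<sigma> = k" using su by simp
  qed
  have ce: "c = (\<lambda>\<sigma>. dif L UNIV a \<sigma> + e \<sigma>)" by (simp add: e_def)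
  have "\<exists>e\<in>hcochains UNIV A' k. c = (\<lambda>\<sigma>. dif L UNIV a \<sigma> + e \<sigma>)"
    by (rule bexI[where x=e]) (rule ce, rule eh)
  thus ?thesis using ah by (rule bexI[where x=a])
qed

lemma claim5: assumes z: "z \<in> hcochains x0 T (k - sv)" and dz: "dif (tA2 L) x0 z = (\<lambda>_. 0)"
  shows "\<exists>c\<in>hcochains UNIV U k. \<exists>b\<in>hcochains x0 T (k - sv - 1).
           dif L UNIV c \<in> cochains A' \<and> phi L c = (\<lambda>\<tau>. z \<tau> + dif (tA2 L) x0 b \<tau>)"
proof -
  let ?p = "lin T psim"
  have zc: "z \<in> cochains T" using z by (simp add: hcochains_def)
  have "?p z \<in> Qh (k - sv + sv)" by (rule psi_hom[OF z])
  moreover have "k - sv + sv = k" by simp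
  ultimately have ch: "?p z \<in> hcochains UNIV U k" using Qh_hco by metis
  have b0: "(\<lambda>_. 0) \<in> hcochains x0 T (k - sv - 1)" by (simp add: hcochains_def cochains_def)
  have dc: "dif L UNIV (?p z) \<in> cochains A'"
    unfolding cochains_def
  proof (intro CollectI allI impI)
    fix \<tau> assume ne: "dif L UNIV (?p z) \<tau> \<noteq> 0"
    have tU: "\<tau> \<subseteq> U" by (rule dif_supp[OF ne])
    have "x0 \<notin> \<tau>"
    proof
      assume x: "x0 \<in> \<tau>"
      have "dif L UNIV (?p z) \<tau> = lin U dq (?p z) \<tau>" using dq_dif[of "?p z" \<tau>] x by simp
      also have "\<dots> = ?p (dif (tA2 L) x0 z) \<tau>" using psi_chain[OF zc] by simp
      also have "\<dots> = 0" unfolding dz lin_zero by simp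
      finally show False using ne by simp
    qed
    thus "\<tau> \<subseteq> A'" by (rule subA'[OF tU])
  qed
  have ph: "phi L (?p z) = (\<lambda>\<tau>. z \<tau> + dif (tA2 L) x0 (\<lambda>_. 0) \<tau>)"
    using phipsi[OF zc] by (simp add: dif_zero)
  have "\<exists>b\<in>hcochains x0 T (k - sv - 1).
           dif L UNIV (?p z) \<in> cochains A' \<and> phi L (?p z) = (\<lambda>\<tau>. z \<tau> + dif (tA2 L) x0 b \<tau>)"
    by (rule bexI[where x="\<lambda>_. 0"]) (rule conjI[OF dc ph], rule b0)
  thus ?thesis using ch by (rule bexI[where x="?p z"])
qed

end

theorem proposition3p5:
  fixes L :: "'n::finite csub list"
  defines "x0 \<equiv> hd L"
      and "A \<equiv> set L"
      and "A' \<equiv> set (tl L)"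
      and "s \<equiv> 2 * int (ccodim UNIV (hd L)) - 1"
  assumes "L \<noteq> []" and "distinct L" and "is_arrangement (set L)"
      and contiguous: "\<And>i j k. 1 \<le> i \<Longrightarrow> i < j \<Longrightarrow> j < k \<Longrightarrow> k < length L \<Longrightarrow>
                 sim x0 (L ! i) (L ! k) \<Longrightarrow> sim x0 (L ! i) (L ! j)"
  shows
    \<comment> \<open>phi vanishes on D(A'), hence induces phi-bar on the quotient\<close>
    "(\<forall>c\<in>cochains A'. phi L c = (\<lambda>_. 0))
     \<comment> \<open>commutes with the differentials\<close>
     \<and> (\<forall>c\<in>cochains A. phi L (dif L UNIV c) = dif (tA2 L) x0 (phi L c))
     \<comment> \<open>lowers degrees by 2 codim x0 - 1\<close>
     \<and> (\<forall>k. \<forall>c\<in>hcochains UNIV A k. phi L c \<in> hcochains x0 (set (tA2 L)) (k - s))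
     \<comment> \<open>injective on cohomology H^k(D(A)/D(A')) \<rightarrow> H^(k-s)(D(tilde A''))\<close>
     \<and> (\<forall>k. \<forall>c\<in>hcochains UNIV A k.
          dif L UNIV c \<in> cochains A' \<and>
          (\<exists>b\<in>hcochains x0 (set (tA2 L)) (k - s - 1). phi L c = dif (tA2 L) x0 b)
          \<longrightarrow> (\<exists>a\<in>hcochains UNIV A (k - 1). \<exists>e\<in>hcochains UNIV A' k.
                 c = (\<lambda>\<sigma>. dif L UNIV a \<sigma> + e \<sigma>)))
     \<comment> \<open>surjective on cohomology\<close>
     \<and> (\<forall>k. \<forall>z\<in>hcochains x0 (set (tA2 L)) (k - s).
          dif (tA2 L) x0 z = (\<lambda>_. 0)
          \<longrightarrow> (\<exists>c\<in>hcochains UNIV A k. \<exists>b\<in>hcochains x0 (set (tA2 L)) (k - s - 1).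
                 dif L UNIV c \<in> cochains A' \<and>
                 phi L c = (\<lambda>\<tau>. z \<tau> + dif (tA2 L) x0 b \<tau>)))"
proof -
  have c': "\<And>i j k. 1 \<le> i \<Longrightarrow> i < j \<Longrightarrow> j < k \<Longrightarrow> k < length L \<Longrightarrow>
                 sim (hd L) (L ! i) (L ! k) \<Longrightarrow> sim (hd L) (L ! i) (L ! j)"
    using contiguous unfolding x0_def by blast
  interpret S: setting L
    by (rule setting.intro) (use assms(5-7) c' in auto)
  show ?thesis unfolding x0_def A_def A'_def s_def
  proof (intro conjI allI ballI impI)
    fix c assume "c \<in> cochains (set (tl L))"
    thus "phi L c = (\<lambda>_. 0)" by (rule S.claim1)
  next
    fix c show "phi L (dif L UNIV c) = dif (tA2 L) (hd L) (phi L c)" by (rule S.claim2)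
  next
    fix k c assume "c \<in> hcochains UNIV (set L) k"
    thus "phi L c \<in> hcochains (hd L) (set (tA2 L)) (k - (2 * int (ccodim UNIV (hd L)) - 1))"
      by (rule S.claim3)
  next
    fix k c assume ch: "c \<in> hcochains UNIV (set L) k"
      and h: "dif L UNIV c \<in> cochains (set (tl L)) \<and>
        (\<exists>b\<in>hcochains (hd L) (set (tA2 L)) (k - (2 * int (ccodim UNIV (hd L)) - 1) - 1).
           phi L c = dif (tA2 L) (hd L) b)"
    thus "\<exists>a\<in>hcochains UNIV (set L) (k - 1). \<exists>e\<in>hcochains UNIV (set (tl L)) k.
          c = (\<lambda>\<sigma>. dif L UNIV a \<sigma> + e \<sigma>)"
    proof -
      obtain b where b: "b \<in> hcochains (hd L) (set (tA2 L)) (k - (2 * int (ccodim UNIV (hd L)) - 1) - 1)"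
        and pb: "phi L c = dif (tA2 L) (hd L) b" using h by blast
      have dc: "dif L UNIV c \<in> cochains (set (tl L))" using h by blast
      show ?thesis by (rule S.claim4[OF ch dc b pb])
    qed
  next
    fix k z assume "z \<in> hcochains (hd L) (set (tA2 L)) (k - (2 * int (ccodim UNIV (hd L)) - 1))"
      and "dif (tA2 L) (hd L) z = (\<lambda>_. 0)"
    thus "\<exists>c\<in>hcochains UNIV (set L) k.
          \<exists>b\<in>hcochains (hd L) (set (tA2 L)) (k - (2 * int (ccodim UNIV (hd L)) - 1) - 1).
             dif L UNIV c \<in> cochains (set (tl L)) \<and> phi L c = (\<lambda>\<tau>. z \<tau> + dif (tA2 L) (hd L) b \<tau>)"
      by (rule S.claim5)
  qed
qed

end
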